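(* Let $\chi>0$, $\phi\in C^1(\mathbb{R})$ with $\phi'>0$, $\phi(0)>0$, and $g\in C^1([0,\infty))$ positive with exactly one $\beta>0$ such that $g'<0$ on $[0,\beta)$ and $g'>0$ on $(\beta,\infty)$. Let $g(\beta)<u_-<\min\{g(0),\lim_{V\to\infty}g(V)\}$, $0<v_+<\beta<v_-$ with $g(v_\pm)=u_-$, and let $s>\chi\phi(0)$ be a speed for which, for all small $\epsilon>0$, there is a traveling pulse $(U,V)(\xi)$, $\xi=x-st$, of $u_t=(\epsilon u_x-\chi u\phi(v_x))_x$, $\epsilon v_t=v_{xx}+u-g(v)$, with $U(\pm\infty)=u_-=:u_+$, $V(\pm\infty)=v_\pm$, $U',V'\to0$ at $\pm\infty$ (as provided by the existence theorem for $\chi\phi(0)<s<s_*$). Then this traveling pulse is linearly unstable in $X=BUC(\mathbb{R};\mathbb{R}^2)$: for $\epsilon>0$ sufficiently small, the essential spectrum of the linearized operator $\mathcal{L}$ on $X$ contains a point $\lambda$ with $\operatorname{Re}\lambda>0$.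
   Context: $BUC(\mathbb{R};\mathbb{R}^2)$ is the space of bounded uniformly continuous functions with the sup norm (complexified for spectral questions). The linearized operator is $\mathcal{L}=D(\xi)\partial_{\xi\xi}+M(\xi)\partial_\xi+N(\xi)I$ with domain $BUC^2(\mathbb{R};\mathbb{R}^2)$ (functions with $\mathbf p,\mathbf p',\mathbf p''\in BUC$), where $D=\begin{pmatrix}\epsilon & -\chi U\phi'(V')\\ 0 & 1/\epsilon\end{pmatrix}$, $M=\begin{pmatrix}s-\chi\phi(V') & -\chi(U\phi'(V'))'\\ 0 & s\end{pmatrix}$, $N=\begin{pmatrix}-\chi(\phi(V'))' & 0\\ 1/\epsilon & -g'(V)/\epsilon\end{pmatrix}$. The essential spectrum is the spectrum minus the isolated eigenvalues of finite multiplicity. Linear instability means the spectrum contains points with positive real part.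
   Formalization: For each small $\epsilon>0$ the pulse also has $U\phi'(V')$ differentiable on all of R, so the entry $-\chi(U\phi'(V'))'$ of M exists as a derivative. The statement above fails without it. *)

theory Defs
  imports "HOL-Analysis.Analysis"
begin

text \<open>Elements of the (complexified) space X = BUC(R;R^2) are represented as
functions real => complex * complex; the norm is the sup over x of the norm of p x.\<close>

type_synonym cfun2 = "real \<Rightarrow> complex \<times> complex"

definition buc :: "(real \<Rightarrow> 'a::real_normed_vector) \<Rightarrow> bool" where
  "buc f \<longleftrightarrow> bounded (range f) \<and> uniformly_continuous_on UNIV f"

definition sup_norm :: "cfun2 \<Rightarrow> real" where
  "sup_norm p = (SUP x. norm (p x))"

definition buc2 :: "cfun2 \<Rightarrow> bool" where
  "buc2 p \<longleftrightarrow>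
     (\<forall>x. p differentiable (at x)) \<and>
     (\<forall>x. (\<lambda>y. vector_derivative p (at y)) differentiable (at x)) \<and>
     buc p \<and> buc (\<lambda>x. vector_derivative p (at x)) \<and>
     buc (\<lambda>x. vector_derivative (\<lambda>y. vector_derivative p (at y)) (at x))"

definition Xspace :: "cfun2 set" where "Xspace = {p. buc p}"
definition Dom2 :: "cfun2 set" where "Dom2 = {p. buc2 p}"

definition csc :: "complex \<Rightarrow> complex \<times> complex \<Rightarrow> complex \<times> complex" where
  "csc c z = (c * fst z, c * snd z)"

text \<open>The linearized operator L = D d^2 + M d + N, with dg the derivative of g.\<close>
definition lin_op ::
  "real \<Rightarrow> real \<Rightarrow> real \<Rightarrow> (real \<Rightarrow> real) \<Rightarrow> (real \<Rightarrow> real) \<Rightarrow>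
   (real \<Rightarrow> real) \<Rightarrow> (real \<Rightarrow> real) \<Rightarrow> cfun2 \<Rightarrow> cfun2" where
  "lin_op \<epsilon> chi s \<phi> dg U V p \<xi> =
    (let V1 = deriv V;
         p1 = vector_derivative p (at \<xi>);
         p2 = vector_derivative (\<lambda>\<eta>. vector_derivative p (at \<eta>)) (at \<xi>);
         d11 = \<epsilon>;
         d12 = - chi * U \<xi> * deriv \<phi> (V1 \<xi>);
         d22 = 1 / \<epsilon>;
         m11 = s - chi * \<phi> (V1 \<xi>);
         m12 = - chi * deriv (\<lambda>\<eta>. U \<eta> * deriv \<phi> (V1 \<eta>)) \<xi>;
         m22 = s;
         n11 = - chi * deriv (\<lambda>\<eta>. \<phi> (V1 \<eta>)) \<xi>;
         n21 = 1 / \<epsilon>;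
         n22 = - dg (V \<xi>) / \<epsilon>
     in (of_real d11 * fst p2 + of_real d12 * snd p2 + of_real m11 * fst p1
           + of_real m12 * snd p1 + of_real n11 * fst (p \<xi>),
         of_real d22 * snd p2 + of_real m22 * snd p1 + of_real n21 * fst (p \<xi>)
           + of_real n22 * snd (p \<xi>)))"

definition shiftop :: "complex \<Rightarrow> (cfun2 \<Rightarrow> cfun2) \<Rightarrow> cfun2 \<Rightarrow> cfun2" where
  "shiftop lam L p = (\<lambda>x. csc lam (p x) - L p x)"

definition in_resolvent :: "(cfun2 \<Rightarrow> cfun2) \<Rightarrow> complex \<Rightarrow> bool" where
  "in_resolvent L lam \<longleftrightarrow> bij_betw (shiftop lam L) Dom2 Xspace \<and>
      (\<exists>C. \<forall>p\<in>Dom2. sup_norm p \<le> C * sup_norm (shiftop lam L p))"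

definition spec :: "(cfun2 \<Rightarrow> cfun2) \<Rightarrow> complex set" where
  "spec L = {lam. \<not> in_resolvent L lam}"

primrec gen_eigsp :: "(cfun2 \<Rightarrow> cfun2) \<Rightarrow> complex \<Rightarrow> nat \<Rightarrow> cfun2 set" where
  "gen_eigsp L lam 0 = {\<lambda>x. 0}"
| "gen_eigsp L lam (Suc k) = {p \<in> Dom2. shiftop lam L p \<in> gen_eigsp L lam k}"

definition fin_dim_c :: "cfun2 set \<Rightarrow> bool" where
  "fin_dim_c S \<longleftrightarrow> (\<exists>B. finite B \<and>
      (\<forall>p\<in>S. \<exists>c. p = (\<lambda>x. \<Sum>b\<in>B. csc (c b) (b x))))"

definition isolated_eig_finite_mult :: "(cfun2 \<Rightarrow> cfun2) \<Rightarrow> complex \<Rightarrow> bool" where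
  "isolated_eig_finite_mult L lam \<longleftrightarrow>
     lam \<in> spec L \<and>
     (\<exists>r>0. \<forall>\<mu>\<in>spec L. dist \<mu> lam < r \<longrightarrow> \<mu> = lam) \<and>
     (\<exists>p\<in>Dom2. p \<noteq> (\<lambda>x. 0) \<and> shiftop lam L p = (\<lambda>x. 0)) \<and>
     fin_dim_c (\<Union>k. gen_eigsp L lam k)"

definition ess_spec :: "(cfun2 \<Rightarrow> cfun2) \<Rightarrow> complex set" where
  "ess_spec L = spec L - {lam. isolated_eig_finite_mult L lam}"

text \<open>Traveling pulse (U,V)(xi), xi = x - s t, of
  u_t = (eps u_x - chi u phi(v_x))_x,  eps v_t = v_xx + u - g(v).\<close>
definition traveling_pulse ::
  "real \<Rightarrow> real \<Rightarrow> real \<Rightarrow> (real \<Rightarrow> real) \<Rightarrow> (real \<Rightarrow> real) \<Rightarrow>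
   real \<Rightarrow> real \<Rightarrow> real \<Rightarrow> (real \<Rightarrow> real) \<Rightarrow> (real \<Rightarrow> real) \<Rightarrow> bool" where
  "traveling_pulse \<epsilon> chi s \<phi> g um vp vm U V \<longleftrightarrow>
     (\<forall>\<xi>. U differentiable (at \<xi>)) \<and>
     (\<forall>\<xi>. V differentiable (at \<xi>)) \<and>
     (\<forall>\<xi>. V \<xi> \<ge> 0) \<and>
     (\<forall>\<xi>. ((\<lambda>\<eta>. \<epsilon> * deriv U \<eta> - chi * U \<eta> * \<phi> (deriv V \<eta>))
             has_real_derivative (- s * deriv U \<xi>)) (at \<xi>)) \<and>
     (\<forall>\<xi>. (deriv V has_real_derivative
             (- \<epsilon> * s * deriv V \<xi> - U \<xi> + g (V \<xi>))) (at \<xi>)) \<and>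
     (U \<longlongrightarrow> um) at_top \<and> (U \<longlongrightarrow> um) at_bot \<and>
     (V \<longlongrightarrow> vp) at_top \<and> (V \<longlongrightarrow> vm) at_bot \<and>
     (deriv U \<longlongrightarrow> 0) at_top \<and> (deriv U \<longlongrightarrow> 0) at_bot \<and>
     (deriv V \<longlongrightarrow> 0) at_top \<and> (deriv V \<longlongrightarrow> 0) at_bot"

end

theory Submission
  imports Defs
begin


lemma buc_lip:
  fixes f :: "real \<Rightarrow> 'b::real_normed_vector"
  assumes d: "\<And>x. (f has_vector_derivative f' x) (at x)"
    and B: "\<And>x. norm (f' x) \<le> B" and bd: "bounded (range f)"
  shows "buc f"
proof -
  have lip: "norm (f x - f y) \<le> B * norm (x - y)" for x y
  proof (rule differentiable_bound[where S=UNIV and f'="\<lambda>x h. h *\<^sub>R f' x"])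
    show "(f has_derivative (\<lambda>h. h *\<^sub>R f' x)) (at x within UNIV)" for x
      using d[of x] by (simp add: has_vector_derivative_def)
    show "onorm (\<lambda>h. h *\<^sub>R f' x) \<le> B" for x
      using onorm_scaleR_left[OF bounded_linear_ident, of "f' x"] B[of x]
      by (simp add: onorm_id)
  qed auto
  have B0: "B \<ge> 0" using B[of 0] norm_ge_zero order_trans by blast
  have "uniformly_continuous_on UNIV f"
    unfolding uniformly_continuous_on_def
  proof (intro allI impI)
    fix e :: real assume e: "e > 0"
    show "\<exists>d>0. \<forall>x\<in>UNIV. \<forall>x'\<in>UNIV. dist x' x < d \<longrightarrow> dist (f x') (f x) < e"
    proof (intro exI[of _ "e/(B+1)"] conjI ballI impI)
      show "e/(B+1) > 0" using e B0 by simp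
      fix x x' :: real assume "dist x' x < e/(B+1)"
      then have h: "norm (x' - x) * (B+1) < e" using B0 by (simp add: dist_norm field_simps)
      have "dist (f x') (f x) \<le> B * norm (x' - x)" using lip by (simp add: dist_norm)
      also have "\<dots> \<le> norm (x' - x) * (B+1)" using B0 by (simp add: algebra_simps)
      finally show "dist (f x') (f x) < e" using h by linarith
    qed
  qed
  then show ?thesis using bd by (simp add: buc_def)
qed

lemma buc_linear:
  assumes "bounded_linear h" "buc f"
  shows "buc (\<lambda>x. h (f x))"
proof -
  have "range (\<lambda>x. h (f x)) = h ` range f" by auto
  then show ?thesis using assms bounded_linear_image bounded_linear.uniformly_continuous_on
    unfolding buc_def by metis
qed

lemma buc_add: fixes f g :: "real \<Rightarrow> 'b::real_normed_vector"
  assumes "buc f" "buc g" shows "buc (\<lambda>x. f x + g x)"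
proof -
  have "range (\<lambda>x. f x + g x) \<subseteq> (\<lambda>(a,b). a + b) ` (range f \<times> range g)" by auto
  moreover have "bounded ((\<lambda>(a,b). a + b) ` (range f \<times> range g))"
    using bounded_plus[of "range f" "range g"] assms unfolding buc_def by (simp add: case_prod_unfold)
  ultimately show ?thesis using assms unfolding buc_def
    using bounded_subset uniformly_continuous_on_add by metis
qed

lemma buc_mult: fixes f g :: "real \<Rightarrow> 'b::real_normed_algebra"
  assumes "buc f" "buc g" shows "buc (\<lambda>x. f x * g x)"
proof -
  obtain Bf where Bf: "Bf > 0" "\<And>x. norm (f x) \<le> Bf" using assms unfolding buc_def
    by (auto simp: bounded_pos)
  obtain Bg where Bg: "Bg > 0" "\<And>x. norm (g x) \<le> Bg" using assms unfolding buc_def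
    by (auto simp: bounded_pos)
  have bd: "bounded (range (\<lambda>x. f x * g x))"
    unfolding bounded_iff
  proof (intro exI[of _ "Bf*Bg"] ballI)
    fix y assume "y \<in> range (\<lambda>x. f x * g x)"
    then obtain x where "y = f x * g x" by auto
    then show "norm y \<le> Bf * Bg"
      using norm_mult_ineq[of "f x" "g x"] mult_mono[OF Bf(2)[of x] Bg(2)[of x]] Bf(1) by simp
  qed
  have "uniformly_continuous_on UNIV (\<lambda>x. f x * g x)"
    unfolding uniformly_continuous_on_def
  proof (intro allI impI)
    fix e :: real assume e: "e > 0"
    obtain d1 where d1: "d1 > 0" "\<And>x x'. dist x' x < d1 \<Longrightarrow> dist (f x') (f x) < e/(2*Bg)"
      using assms(1) e Bg(1) unfolding buc_def uniformly_continuous_on_def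
      by (metis UNIV_I divide_pos_pos mult_pos_pos zero_less_numeral)
    obtain d2 where d2: "d2 > 0" "\<And>x x'. dist x' x < d2 \<Longrightarrow> dist (g x') (g x) < e/(2*Bf)"
      using assms(2) e Bf(1) unfolding buc_def uniformly_continuous_on_def
      by (metis UNIV_I divide_pos_pos mult_pos_pos zero_less_numeral)
    show "\<exists>d>0. \<forall>x\<in>UNIV. \<forall>x'\<in>UNIV. dist x' x < d \<longrightarrow> dist (f x' * g x') (f x * g x) < e"
    proof (intro exI[of _ "min d1 d2"] conjI ballI impI)
      show "min d1 d2 > 0" using d1 d2 by simp
      fix x x' :: real assume h: "dist x' x < min d1 d2"
      have a: "norm (f x' - f x) < e/(2*Bg)" using d1(2)[of x' x] h by (simp add: dist_norm)
      have b: "norm (g x' - g x) < e/(2*Bf)" using d2(2)[of x' x] h by (simp add: dist_norm)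
      have eq: "f x' * g x' - f x * g x = (f x' - f x) * g x' + f x * (g x' - g x)"
        by (simp add: algebra_simps)
      have "norm ((f x' - f x) * g x') \<le> norm (f x' - f x) * Bg"
        using norm_mult_ineq[of "f x' - f x" "g x'"] Bg(2)[of x']
        by (meson mult_left_mono norm_ge_zero order_trans)
      also have "\<dots> \<le> e/(2*Bg) * Bg" using a Bg(1) by (intro mult_right_mono) auto
      also have "\<dots> = e/2" using Bg(1) by simp
      finally have c1: "norm ((f x' - f x) * g x') \<le> e/2" .
      have "norm (f x * (g x' - g x)) \<le> Bf * norm (g x' - g x)"
        using norm_mult_ineq[of "f x" "g x' - g x"] Bf(2)[of x]
        by (meson mult_right_mono norm_ge_zero order_trans)
      also have "\<dots> < Bf * (e/(2*Bf))" using b Bf(1) by (intro mult_strict_left_mono) auto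
      also have "\<dots> = e/2" using Bf(1) by simp
      finally have c2: "norm (f x * (g x' - g x)) < e/2" .
      show "dist (f x' * g x') (f x * g x) < e"
        unfolding dist_norm eq using c1 c2 norm_triangle_ineq[of "(f x' - f x) * g x'" "f x * (g x' - g x)"]
        by linarith
    qed
  qed
  then show ?thesis using bd by (simp add: buc_def)
qed

lemma buc_const: "buc (\<lambda>x. c)"
  by (simp add: buc_def uniformly_continuous_on_const)



definition cd12 where "cd12 chi \<phi> U V \<xi> = - chi * U \<xi> * deriv \<phi> (deriv V \<xi>)"
definition cm11 where "cm11 chi s \<phi> V \<xi> = s - chi * \<phi> (deriv V \<xi>)"
definition cm12 where "cm12 chi \<phi> U V \<xi> = - chi * deriv (\<lambda>\<eta>. U \<eta> * deriv \<phi> (deriv V \<eta>)) \<xi>"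
definition cn11 where "cn11 chi \<phi> V \<xi> = - chi * deriv (\<lambda>\<eta>. \<phi> (deriv V \<eta>)) \<xi>"
definition cn22 where "cn22 \<epsilon> dg V \<xi> = - dg (V \<xi>) / \<epsilon>"

lemma bl_pair: "bounded_linear (\<lambda>c::complex. (c * w1, c * w2))"
  by (intro bounded_linear_Pair bounded_linear_mult_left)

lemma buc_from_deriv:
  fixes \<rho> :: "real \<Rightarrow> complex"
  assumes "\<And>x. (\<rho> has_vector_derivative \<rho>1 x) (at x)" "\<And>x. norm (\<rho>1 x) \<le> B" "\<And>x. norm (\<rho> x) \<le> B"
  shows "buc \<rho>"
proof (rule buc_lip[OF assms(1,2)])
  show "bounded (range \<rho>)" unfolding bounded_iff using assms(3) by auto
qed

lemma dom2_scal:
  fixes \<rho> \<rho>1 \<rho>2 \<rho>3 :: "real \<Rightarrow> complex" and w1 w2 :: complex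
  assumes d1: "\<And>x. (\<rho> has_vector_derivative \<rho>1 x) (at x)"
    and d2: "\<And>x. (\<rho>1 has_vector_derivative \<rho>2 x) (at x)"
    and d3: "\<And>x. (\<rho>2 has_vector_derivative \<rho>3 x) (at x)"
    and b: "\<And>x. norm (\<rho> x) \<le> B" "\<And>x. norm (\<rho>1 x) \<le> B" "\<And>x. norm (\<rho>2 x) \<le> B" "\<And>x. norm (\<rho>3 x) \<le> B"
  defines "p \<equiv> \<lambda>x. (\<rho> x * w1, \<rho> x * w2)"
  shows "p \<in> Dom2"
    and "vector_derivative p (at x) = (\<rho>1 x * w1, \<rho>1 x * w2)"
    and "vector_derivative (\<lambda>y. vector_derivative p (at y)) (at x) = (\<rho>2 x * w1, \<rho>2 x * w2)"
proof -
  have P1: "(p has_vector_derivative (\<rho>1 x * w1, \<rho>1 x * w2)) (at x)" for x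
    unfolding p_def
    by (intro has_vector_derivative_Pair has_vector_derivative_mult_left d1)
  have V1: "(\<lambda>y. vector_derivative p (at y)) = (\<lambda>x. (\<rho>1 x * w1, \<rho>1 x * w2))"
    using P1 vector_derivative_at by blast
  have P2: "((\<lambda>x. (\<rho>1 x * w1, \<rho>1 x * w2)) has_vector_derivative (\<rho>2 x * w1, \<rho>2 x * w2)) (at x)" for x
    by (intro has_vector_derivative_Pair has_vector_derivative_mult_left d2)
  have V2: "(\<lambda>y. vector_derivative (\<lambda>x. (\<rho>1 x * w1, \<rho>1 x * w2)) (at y)) = (\<lambda>x. (\<rho>2 x * w1, \<rho>2 x * w2))"
    using P2 vector_derivative_at by blast
  show "vector_derivative p (at x) = (\<rho>1 x * w1, \<rho>1 x * w2)" using V1 by metis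
  show "vector_derivative (\<lambda>y. vector_derivative p (at y)) (at x) = (\<rho>2 x * w1, \<rho>2 x * w2)"
    using V1 V2 by metis
  have b0: "buc \<rho>" by (rule buc_from_deriv[OF d1 b(2) b(1)])
  have b1: "buc \<rho>1" by (rule buc_from_deriv[OF d2 b(3) b(2)])
  have b2: "buc \<rho>2" by (rule buc_from_deriv[OF d3 b(4) b(3)])
  show "p \<in> Dom2"
    unfolding Dom2_def buc2_def mem_Collect_eq V1 V2
  proof (intro conjI allI)
    show "p differentiable at x" for x using P1 differentiableI_vector by blast
    show "(\<lambda>x. (\<rho>1 x * w1, \<rho>1 x * w2)) differentiable at x" for x using P2 differentiableI_vector by blast
    show "buc p" unfolding p_def by (rule buc_linear[OF bl_pair b0])
    show "buc (\<lambda>x. (\<rho>1 x * w1, \<rho>1 x * w2))" by (rule buc_linear[OF bl_pair b1])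
    show "buc (\<lambda>x. (\<rho>2 x * w1, \<rho>2 x * w2))" by (rule buc_linear[OF bl_pair b2])
  qed
qed

lemma lin_op_scal:
  assumes "vector_derivative p (at x) = (r1 * w1, r1 * w2)"
    and "vector_derivative (\<lambda>y. vector_derivative p (at y)) (at x) = (r2 * w1, r2 * w2)"
    and "p x = (r0 * w1, r0 * w2)"
  shows "lin_op \<epsilon> chi s \<phi> dg U V p x =
    (of_real \<epsilon> * (r2 * w1) + of_real (cd12 chi \<phi> U V x) * (r2 * w2) + of_real (cm11 chi s \<phi> V x) * (r1 * w1)
      + of_real (cm12 chi \<phi> U V x) * (r1 * w2) + of_real (cn11 chi \<phi> V x) * (r0 * w1),
     of_real (1/\<epsilon>) * (r2 * w2) + of_real s * (r1 * w2) + of_real (1/\<epsilon>) * (r0 * w1)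
      + of_real (cn22 \<epsilon> dg V x) * (r0 * w2))"
  using assms unfolding lin_op_def Let_def cd12_def cm11_def cm12_def cn11_def cn22_def
  by simp



lemma sup_norm_ge:
  assumes "bounded (range p)" shows "norm (p x) \<le> sup_norm p"
proof -
  have "bdd_above (range (\<lambda>x. norm (p x)))"
    using assms unfolding bounded_iff bdd_above_def by auto
  then show ?thesis unfolding sup_norm_def by (intro cSUP_upper) auto
qed

lemma sup_norm_le:
  assumes "\<And>x. norm (p x) \<le> d" shows "sup_norm p \<le> d"
  unfolding sup_norm_def using assms by (intro cSUP_least) auto

lemma spec_approx:
  assumes "\<And>\<delta>. \<delta> > 0 \<Longrightarrow> \<exists>p\<in>Dom2. (\<exists>x. norm (p x) \<ge> 1) \<and> (\<forall>x. norm (shiftop lam L p x) \<le> \<delta>)"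
  shows "lam \<in> spec L"
proof -
  {
    assume r: "in_resolvent L lam"
    then obtain C where C: "\<forall>p\<in>Dom2. sup_norm p \<le> C * sup_norm (shiftop lam L p)"
      unfolding in_resolvent_def by auto
    have bij: "bij_betw (shiftop lam L) Dom2 Xspace" using r unfolding in_resolvent_def by auto
    define \<delta> where "\<delta> = 1 / (2 * (\<bar>C\<bar> + 1))"
    have dpos: "\<delta> > 0" unfolding \<delta>_def by (simp add: add_pos_nonneg)
    obtain p x where p: "p \<in> Dom2" "norm (p x) \<ge> 1" "\<forall>x. norm (shiftop lam L p x) \<le> \<delta>"
      using assms[OF dpos] by auto
    have "shiftop lam L p \<in> Xspace" using bij p(1) bij_betw_imp_surj_on by blast
    then have bs: "bounded (range (shiftop lam L p))" by (simp add: Xspace_def buc_def)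
    have bp: "bounded (range p)" using p(1) by (simp add: Dom2_def buc2_def buc_def)
    have S0: "0 \<le> sup_norm (shiftop lam L p)" using sup_norm_ge[OF bs, of 0] norm_ge_zero order_trans by blast
    have S1: "sup_norm (shiftop lam L p) \<le> \<delta>" using sup_norm_le p(3) by blast
    have "1 \<le> sup_norm p" using sup_norm_ge[OF bp, of x] p(2) by linarith
    also have "\<dots> \<le> C * sup_norm (shiftop lam L p)" using C p(1) by blast
    also have "\<dots> \<le> \<bar>C\<bar> * sup_norm (shiftop lam L p)" using S0 by (simp add: mult_right_mono)
    also have "\<dots> \<le> \<bar>C\<bar> * \<delta>" using S1 by (simp add: mult_left_mono)
    also have "\<dots> < 1" unfolding \<delta>_def by (simp add: field_simps)
    finally have False by simp
  }
  then show ?thesis unfolding spec_def by auto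
qed

lemma ess_nonisolated:
  assumes "lam \<in> spec L" "\<And>r. r > 0 \<Longrightarrow> \<exists>\<mu>\<in>spec L. \<mu> \<noteq> lam \<and> dist \<mu> lam < r"
  shows "lam \<in> ess_spec L"
  using assms unfolding ess_spec_def isolated_eig_finite_mult_def by blast

lemma caseA:
  assumes "p \<in> Dom2" "\<not> buc (shiftop 0 L p)"
  shows "spec L = UNIV"
proof -
  {
    fix lam assume r: "in_resolvent L lam"
    then have "shiftop lam L p \<in> Xspace" using assms(1) bij_betw_imp_surj_on
      unfolding in_resolvent_def by blast
    then have b1: "buc (shiftop lam L p)" by (simp add: Xspace_def)
    have bp: "buc p" using assms(1) by (simp add: Dom2_def buc2_def)
    have bl: "bounded_linear (csc (- lam))" unfolding csc_def
      by (intro bounded_linear_Pair bounded_linear_compose[OF bounded_linear_mult_right] bounded_linear_fst bounded_linear_snd)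
    have b2: "buc (\<lambda>x. csc (-lam) (p x))" by (rule buc_linear[OF bl bp])
    have "shiftop 0 L p = (\<lambda>x. csc (-lam) (p x) + shiftop lam L p x)"
      unfolding shiftop_def csc_def by (auto simp: fun_eq_iff)
    then have "buc (shiftop 0 L p)" using buc_add[OF b2 b1] by simp
    then have False using assms(2) by simp
  }
  then show ?thesis unfolding spec_def by auto
qed

lemma ess_univ:
  assumes "spec L = UNIV" shows "lam \<in> ess_spec L"
proof (rule ess_nonisolated)
  show "lam \<in> spec L" using assms by simp
  fix r :: real assume "r > 0"
  then show "\<exists>\<mu>\<in>spec L. \<mu> \<noteq> lam \<and> dist \<mu> lam < r"
    using assms by (intro bexI[of _ "lam + of_real (r/2)"]) (auto simp: dist_norm)
qed



definition ee :: "real \<Rightarrow> complex" where "ee x = exp (\<i> * of_real x)"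

lemma ee_deriv: "((\<lambda>x. c * ee x) has_vector_derivative (c * \<i>) * ee x) (at x)"
proof -
  have "((\<lambda>z. c * exp (\<i> * z)) has_field_derivative (c * \<i>) * exp (\<i> * of_real x)) (at (of_real x))"
    by (auto intro!: derivative_eq_intros)
  from has_vector_derivative_real_field[OF this] show ?thesis unfolding ee_def by simp
qed

lemma norm_ee[simp]: "norm (ee x) = 1"
  unfolding ee_def by (metis mult.commute norm_exp_i_times)

lemma ee_mult: "ee (-x) * ee x = 1"
  unfolding ee_def by (simp add: exp_minus field_simps)

lemma buc_ee: "buc (\<lambda>x. c * ee x)"
  by (rule buc_from_deriv[OF ee_deriv, of _ "norm c"]) (auto simp: norm_mult)

lemma buc_ee_neg: "buc (\<lambda>x. ee (-x))"
proof -
  have "(\<lambda>x. ee (-x)) = (\<lambda>x. cnj (ee x))" unfolding ee_def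
    by (auto simp: fun_eq_iff exp_cnj)
  moreover have "buc (\<lambda>x. cnj (1 * ee x))" by (rule buc_linear[OF bounded_linear_cnj buc_ee])
  ultimately show ?thesis by simp
qed

lemma ee_dom2:
  fixes w1 w2 :: complex
  defines "p \<equiv> \<lambda>x. (ee x * w1, ee x * w2)"
  shows "p \<in> Dom2"
    and "vector_derivative p (at x) = ((\<i> * ee x) * w1, (\<i> * ee x) * w2)"
    and "vector_derivative (\<lambda>y. vector_derivative p (at y)) (at x) = ((- ee x) * w1, (- ee x) * w2)"
proof -
  have d1: "(ee has_vector_derivative \<i> * ee x) (at x)" for x using ee_deriv[of 1 x] by simp
  have d2: "((\<lambda>x. \<i> * ee x) has_vector_derivative - ee x) (at x)" for x using ee_deriv[of \<i> x] by simp
  have d3: "((\<lambda>x. - ee x) has_vector_derivative - \<i> * ee x) (at x)" for x using ee_deriv[of "-1" x] by simp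
  note D = dom2_scal[OF d1 d2 d3, of 1 w1 w2]
  show "p \<in> Dom2" unfolding p_def by (rule D(1)) (auto simp: norm_mult)
  show "vector_derivative p (at x) = ((\<i> * ee x) * w1, (\<i> * ee x) * w2)" unfolding p_def
    by (rule D(2)) (auto simp: norm_mult)
  show "vector_derivative (\<lambda>y. vector_derivative p (at y)) (at x) = ((- ee x) * w1, (- ee x) * w2)"
    unfolding p_def by (rule D(3)) (auto simp: norm_mult)
qed

lemma buc_Re: "buc f \<Longrightarrow> buc (\<lambda>x. Re (f x))"
  by (rule buc_linear[OF bounded_linear_Re])
lemma buc_Im: "buc f \<Longrightarrow> buc (\<lambda>x. Im (f x))"
  by (rule buc_linear[OF bounded_linear_Im])
lemma buc_fst: "buc f \<Longrightarrow> buc (\<lambda>x. fst (f x))"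
  by (rule buc_linear[OF bounded_linear_fst])
lemma buc_snd: "buc f \<Longrightarrow> buc (\<lambda>x. snd (f x))"
  by (rule buc_linear[OF bounded_linear_snd])

lemma buc_real_affine: fixes f :: "real \<Rightarrow> real"
  assumes "buc f" shows "buc (\<lambda>x. a * f x + b)"
  using buc_add[OF buc_linear[OF bounded_linear_mult_right assms] buc_const] by simp

lemma caseB_coeffs:
  assumes B: "\<forall>p\<in>Dom2. buc (shiftop 0 (lin_op \<epsilon> chi s \<phi> dg U V) p)"
  shows "buc (cd12 chi \<phi> U V)" "buc (cm11 chi s \<phi> V)" "buc (cm12 chi \<phi> U V)"
    "buc (cn11 chi \<phi> V)" "buc (cn22 \<epsilon> dg V)"
proof -
  let ?L = "lin_op \<epsilon> chi s \<phi> dg U V"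
  define pa where "pa = (\<lambda>x. (ee x * 1, ee x * 0))"
  define pb where "pb = (\<lambda>x. (ee x * 0, ee x * 1))"
  have Fa: "buc (\<lambda>x. ee (-x) * fst (shiftop 0 ?L pa x))"
    using buc_mult[OF buc_ee_neg buc_fst[OF B[rule_format, OF ee_dom2(1)]]] unfolding pa_def .
  have Fb1: "buc (\<lambda>x. ee (-x) * fst (shiftop 0 ?L pb x))"
    using buc_mult[OF buc_ee_neg buc_fst[OF B[rule_format, OF ee_dom2(1)]]] unfolding pb_def .
  have Fb2: "buc (\<lambda>x. ee (-x) * snd (shiftop 0 ?L pb x))"
    using buc_mult[OF buc_ee_neg buc_snd[OF B[rule_format, OF ee_dom2(1)]]] unfolding pb_def .
  have La: "?L pa x = (of_real \<epsilon> * (- ee x * 1) + of_real (cd12 chi \<phi> U V x) * (- ee x * 0) + of_real (cm11 chi s \<phi> V x) * ((\<i> * ee x) * 1)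
      + of_real (cm12 chi \<phi> U V x) * ((\<i> * ee x) * 0) + of_real (cn11 chi \<phi> V x) * (ee x * 1),
     of_real (1/\<epsilon>) * (- ee x * 0) + of_real s * ((\<i> * ee x) * 0) + of_real (1/\<epsilon>) * (ee x * 1)
      + of_real (cn22 \<epsilon> dg V x) * (ee x * 0))" for x
    unfolding pa_def by (rule lin_op_scal, rule ee_dom2(2), rule ee_dom2(3), simp)
  have Lb: "?L pb x = (of_real \<epsilon> * (- ee x * 0) + of_real (cd12 chi \<phi> U V x) * (- ee x * 1) + of_real (cm11 chi s \<phi> V x) * ((\<i> * ee x) * 0)
      + of_real (cm12 chi \<phi> U V x) * ((\<i> * ee x) * 1) + of_real (cn11 chi \<phi> V x) * (ee x * 0),
     of_real (1/\<epsilon>) * (- ee x * 1) + of_real s * ((\<i> * ee x) * 1) + of_real (1/\<epsilon>) * (ee x * 0)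
      + of_real (cn22 \<epsilon> dg V x) * (ee x * 1))" for x
    unfolding pb_def by (rule lin_op_scal, rule ee_dom2(2), rule ee_dom2(3), simp)
  have e1: "ee (-x) * (ee x * c) = c" for x c by (metis ee_mult mult.assoc mult_1)
  have a: "ee (-x) * fst (shiftop 0 ?L pa x) = of_real \<epsilon> - \<i> * of_real (cm11 chi s \<phi> V x) - of_real (cn11 chi \<phi> V x)" for x
  proof -
    have "fst (shiftop 0 ?L pa x) = ee x * (of_real \<epsilon> - \<i> * of_real (cm11 chi s \<phi> V x) - of_real (cn11 chi \<phi> V x))"
      unfolding shiftop_def csc_def La by (simp add: algebra_simps)
    then show ?thesis by (metis e1)
  qed
  have b1: "ee (-x) * fst (shiftop 0 ?L pb x) = of_real (cd12 chi \<phi> U V x) - \<i> * of_real (cm12 chi \<phi> U V x)" for x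
  proof -
    have "fst (shiftop 0 ?L pb x) = ee x * (of_real (cd12 chi \<phi> U V x) - \<i> * of_real (cm12 chi \<phi> U V x))"
      unfolding shiftop_def csc_def Lb by (simp add: algebra_simps)
    then show ?thesis by (metis e1)
  qed
  have b2: "ee (-x) * snd (shiftop 0 ?L pb x) = of_real (1/\<epsilon>) - \<i> * of_real s - of_real (cn22 \<epsilon> dg V x)" for x
  proof -
    have "snd (shiftop 0 ?L pb x) = ee x * (of_real (1/\<epsilon>) - \<i> * of_real s - of_real (cn22 \<epsilon> dg V x))"
      unfolding shiftop_def csc_def Lb by (simp add: algebra_simps)
    then show ?thesis by (metis e1)
  qed
  have "buc (\<lambda>x. Re (ee (-x) * fst (shiftop 0 ?L pa x)))" by (rule buc_Re[OF Fa])
  then have "buc (\<lambda>x. (-1) * (\<epsilon> - cn11 chi \<phi> V x) + \<epsilon>)" unfolding a by (intro buc_real_affine) simp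
  then show "buc (cn11 chi \<phi> V)" by simp
  have "buc (\<lambda>x. Im (ee (-x) * fst (shiftop 0 ?L pa x)))" by (rule buc_Im[OF Fa])
  then have "buc (\<lambda>x. (-1) * (- cm11 chi s \<phi> V x) + 0)" unfolding a by (intro buc_real_affine) simp
  then show "buc (cm11 chi s \<phi> V)" by simp
  have "buc (\<lambda>x. Re (ee (-x) * fst (shiftop 0 ?L pb x)))" by (rule buc_Re[OF Fb1])
  then show "buc (cd12 chi \<phi> U V)" unfolding b1 by simp
  have "buc (\<lambda>x. Im (ee (-x) * fst (shiftop 0 ?L pb x)))" by (rule buc_Im[OF Fb1])
  then have "buc (\<lambda>x. (-1) * (- cm12 chi \<phi> U V x) + 0)" unfolding b1 by (intro buc_real_affine) simp
  then show "buc (cm12 chi \<phi> U V)" by simp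
  have "buc (\<lambda>x. Re (ee (-x) * snd (shiftop 0 ?L pb x)))" by (rule buc_Re[OF Fb2])
  then have "buc (\<lambda>x. (-1) * (1/\<epsilon> - cn22 \<epsilon> dg V x) + 1/\<epsilon>)" unfolding b2 by (intro buc_real_affine) simp
  then show "buc (cn22 \<epsilon> dg V)" by simp
qed



lemma barbalat:
  fixes h h' :: "real \<Rightarrow> real"
  assumes d: "\<And>x. (h has_real_derivative h' x) (at x)"
    and lim: "(h \<longlongrightarrow> c) at_top" and uc: "uniformly_continuous_on UNIV h'"
  shows "(h' \<longlongrightarrow> 0) at_top"
proof (rule tendstoI)
  fix e :: real assume e: "e > 0"
  obtain d where d0: "d > 0" and dd: "\<And>x y. dist y x < d \<Longrightarrow> dist (h' y) (h' x) < e/2"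
    using uc e unfolding uniformly_continuous_on_def
    by (metis UNIV_I half_gt_zero)
  define \<eta> where "\<eta> = d/2"
  have eta: "\<eta> > 0" "\<eta> < d" using d0 by (auto simp: \<eta>_def)
  have "eventually (\<lambda>x. dist (h x) c < e * \<eta> / 4) at_top"
    using lim eta e by (intro tendstoD) auto
  then obtain N where N: "\<And>x. x \<ge> N \<Longrightarrow> \<bar>h x - c\<bar> < e * \<eta> / 4"
    by (auto simp: eventually_at_top_linorder dist_real_def)
  show "eventually (\<lambda>x. dist (h' x) 0 < e) at_top"
    unfolding eventually_at_top_linorder
  proof (intro exI[of _ N] allI impI)
    fix x assume x: "x \<ge> N"
    show "dist (h' x) 0 < e"
    proof (rule ccontr)
      assume "\<not> dist (h' x) 0 < e"
      then have hx: "\<bar>h' x\<bar> \<ge> e" by (simp add: dist_real_def)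
      obtain z where z: "x < z" "z < x + \<eta>" "h (x + \<eta>) - h x = (x + \<eta> - x) * h' z"
        using MVT2[of x "x + \<eta>" h h'] d eta by auto
      have "dist z x < d" using z eta by (simp add: dist_real_def)
      then have "\<bar>h' z - h' x\<bar> < e/2" using dd by (simp add: dist_real_def)
      then have hz: "\<bar>h' z\<bar> > e/2" using hx by linarith
      have "\<bar>h (x + \<eta>) - h x\<bar> = \<eta> * \<bar>h' z\<bar>" using z eta by (simp add: abs_mult)
      also have "\<dots> \<ge> \<eta> * (e/2)" using hz eta by (intro mult_left_mono) auto
      finally have A: "\<bar>h (x + \<eta>) - h x\<bar> \<ge> \<eta> * (e/2)" .
      have "\<bar>h (x + \<eta>) - c\<bar> < e * \<eta> / 4" using N[of "x+\<eta>"] x eta by simp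
      moreover have "\<bar>h x - c\<bar> < e * \<eta> / 4" using N x by simp
      moreover have "\<eta> * (e/2) = 2 * (e * \<eta> / 4)" by simp
      ultimately show False using A by linarith
    qed
  qed
qed



lemma coeff_limits:
  fixes U V \<phi> g dg :: "real \<Rightarrow> real"
  assumes phi_d: "\<forall>x. (\<phi> has_real_derivative deriv \<phi> x) (at x)"
    and phi_c: "continuous_on UNIV (deriv \<phi>)"
    and g_c: "continuous_on {0..} dg"
    and g_d: "\<forall>x\<ge>0. (g has_real_derivative dg x) (at x within {0..})"
    and vp: "vp > 0" "g vp = um"
    and chi: "chi > 0" and eps: "\<epsilon> > 0"
    and Vd: "\<forall>\<xi>. (deriv V has_real_derivative (- \<epsilon> * s * deriv V \<xi> - U \<xi> + g (V \<xi>))) (at \<xi>)"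
    and lims: "(U \<longlongrightarrow> um) at_top" "(V \<longlongrightarrow> vp) at_top" "(deriv V \<longlongrightarrow> 0) at_top"
    and wd: "\<forall>\<xi>. (\<lambda>\<eta>. U \<eta> * deriv \<phi> (deriv V \<eta>)) differentiable (at \<xi>)"
    and b12: "buc (cm12 chi \<phi> U V)"
  shows "(cd12 chi \<phi> U V \<longlongrightarrow> - chi * um * deriv \<phi> 0) at_top"
    "(cm11 chi s \<phi> V \<longlongrightarrow> s - chi * \<phi> 0) at_top"
    "(cn22 \<epsilon> dg V \<longlongrightarrow> - dg vp / \<epsilon>) at_top"
    "(cn11 chi \<phi> V \<longlongrightarrow> 0) at_top"
    "(cm12 chi \<phi> U V \<longlongrightarrow> 0) at_top"
proof -
  have c_phi': "isCont (deriv \<phi>) x" for x using phi_c continuous_on_eq_continuous_at by blast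
  have c_phi: "isCont \<phi> x" for x using phi_d DERIV_isCont by blast
  have c_dg: "isCont dg vp" using g_c vp(1) continuous_on_interior[of "{0..}" dg vp] by simp
  have "(g has_real_derivative dg vp) (at vp)"
  proof -
    have "vp \<in> interior {0..}" using vp(1) by simp
    then have "at vp within {0..} = at vp" by (rule at_within_interior)
    moreover have "(g has_real_derivative dg vp) (at vp within {0..})" using g_d vp(1) by simp
    ultimately show ?thesis by simp
  qed
  then have c_g: "isCont g vp" by (rule DERIV_isCont)
  have tphi': "((\<lambda>x. deriv \<phi> (deriv V x)) \<longlongrightarrow> deriv \<phi> 0) at_top"
    using isCont_tendsto_compose[OF c_phi' lims(3)] .
  have tphi: "((\<lambda>x. \<phi> (deriv V x)) \<longlongrightarrow> \<phi> 0) at_top"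
    using isCont_tendsto_compose[OF c_phi lims(3)] .
  show "(cd12 chi \<phi> U V \<longlongrightarrow> - chi * um * deriv \<phi> 0) at_top"
    unfolding cd12_def by (intro tendsto_intros lims tphi')
  show "(cm11 chi s \<phi> V \<longlongrightarrow> s - chi * \<phi> 0) at_top"
    unfolding cm11_def by (intro tendsto_intros tphi)
  have tdg: "((\<lambda>x. dg (V x)) \<longlongrightarrow> dg vp) at_top" using isCont_tendsto_compose[OF c_dg lims(2)] .
  show "(cn22 \<epsilon> dg V \<longlongrightarrow> - dg vp / \<epsilon>) at_top"
    unfolding cn22_def using eps by (intro tendsto_intros tdg) auto
  have tg: "((\<lambda>x. g (V x)) \<longlongrightarrow> g vp) at_top" using isCont_tendsto_compose[OF c_g lims(2)] .
  have dchain: "deriv (\<lambda>\<eta>. \<phi> (deriv V \<eta>)) x = deriv \<phi> (deriv V x) * (- \<epsilon> * s * deriv V x - U x + g (V x))" for x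
    by (rule DERIV_imp_deriv, rule DERIV_chain2[OF phi_d[rule_format] Vd[rule_format]])
  have "((\<lambda>x. - chi * (deriv \<phi> (deriv V x) * (- \<epsilon> * s * deriv V x - U x + g (V x)))) \<longlongrightarrow>
      - chi * (deriv \<phi> 0 * (- \<epsilon> * s * 0 - um + g vp))) at_top"
    by (intro tendsto_intros tphi' lims tg)
  then show "(cn11 chi \<phi> V \<longlongrightarrow> 0) at_top"
    unfolding cn11_def dchain using vp(2) by simp
  define h where "h = (\<lambda>\<eta>. U \<eta> * deriv \<phi> (deriv V \<eta>))"
  have hd: "(h has_real_derivative deriv h x) (at x)" for x
    using wd unfolding h_def by (simp add: DERIV_deriv_iff_real_differentiable)
  have hl: "(h \<longlongrightarrow> um * deriv \<phi> 0) at_top" unfolding h_def by (intro tendsto_intros lims tphi')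
  have "buc (\<lambda>x. (-1/chi) * cm12 chi \<phi> U V x + 0)" by (rule buc_real_affine[OF b12])
  moreover have "(\<lambda>x. (-1/chi) * cm12 chi \<phi> U V x + 0) = deriv h"
    using chi by (auto simp: fun_eq_iff cm12_def h_def)
  ultimately have "uniformly_continuous_on UNIV (deriv h)" by (simp add: buc_def)
  from barbalat[OF hd hl this] have "(deriv h \<longlongrightarrow> 0) at_top" .
  then have "((\<lambda>x. - chi * deriv h x) \<longlongrightarrow> - chi * 0) at_top" by (intro tendsto_intros)
  then show "(cm12 chi \<phi> U V \<longlongrightarrow> 0) at_top" unfolding cm12_def h_def by simp
qed



lemma deriv_quot_pow:
  fixes f g :: "complex \<Rightarrow> complex"
  assumes "(f has_field_derivative f') (at t)" "(g has_field_derivative g') (at t)" "g t \<noteq> 0"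
  shows "((\<lambda>t. f t / g t ^ m) has_field_derivative (f' / g t ^ m - of_nat m * f t * g' / g t ^ Suc m)) (at t)"
proof -
  have "((\<lambda>t. f t / g t ^ m) has_field_derivative
     (f' * g t ^ m - f t * (of_nat m * g t ^ (m - 1) * g')) / (g t ^ m * g t ^ m)) (at t)"
    using assms by (auto intro!: derivative_eq_intros)
  moreover have "(f' * g t ^ m - f t * (of_nat m * g t ^ (m - 1) * g')) / (g t ^ m * g t ^ m)
     = f' / g t ^ m - of_nat m * f t * g' / g t ^ Suc m"
  proof (cases m)
    case 0 then show ?thesis using assms(3) by (simp add: field_simps)
  next
    case (Suc n)
    obtain G where G: "G = g t" by simp
    have "G \<noteq> 0" using assms(3) G by simp
    then show ?thesis unfolding Suc G[symmetric] by (simp add: field_simps)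
  qed
  ultimately show ?thesis by simp
qed

definition Fc :: "real \<Rightarrow> real \<Rightarrow> real \<Rightarrow> nat \<Rightarrow> complex \<Rightarrow> complex" where
  "Fc k a b m t = exp (\<i> * of_real k * t) / (1 - \<i> * (t - of_real a) / of_real b) ^ m"

definition Gf :: "real \<Rightarrow> real \<Rightarrow> real \<Rightarrow> nat \<Rightarrow> real \<Rightarrow> complex" where
  "Gf k a b m x = Fc k a b m (of_real x)"

lemma zne: "b \<noteq> 0 \<Longrightarrow> 1 - \<i> * (of_real x - of_real a) / of_real b \<noteq> (0::complex)"
proof
  assume "b \<noteq> 0" "1 - \<i> * (of_real x - of_real a) / of_real b = (0::complex)"
  then have "Re (1 - \<i> * (of_real x - of_real a) / of_real b) = 0" by simp
  then show False by (simp add: Re_divide)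
qed

lemma Gf_deriv:
  assumes b: "b \<noteq> 0"
  shows "(Gf k a b m has_vector_derivative (\<i> * of_real k * Gf k a b m x + (\<i> * of_nat m / of_real b) * Gf k a b (Suc m) x)) (at x)"
proof -
  have d1: "((\<lambda>t. exp (\<i> * of_real k * t)) has_field_derivative \<i> * of_real k * exp (\<i> * of_real k * of_real x)) (at (of_real x))"
    by (auto intro!: derivative_eq_intros)
  have d2: "((\<lambda>t. 1 - \<i> * (t - of_real a) / of_real b) has_field_derivative - \<i> / of_real b) (at (of_real x))"
    using b by (auto intro!: derivative_eq_intros)
  have "(Fc k a b m has_field_derivative (\<i> * of_real k * exp (\<i> * of_real k * of_real x)) / (1 - \<i> * (of_real x - of_real a) / of_real b) ^ m
      - of_nat m * exp (\<i> * of_real k * of_real x) * (- \<i> / of_real b) / (1 - \<i> * (of_real x - of_real a) / of_real b) ^ Suc m) (at (of_real x))"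
    unfolding Fc_def by (rule deriv_quot_pow[OF d1 d2 zne[OF b]])
  moreover have "(\<i> * of_real k * exp (\<i> * of_real k * of_real x)) / (1 - \<i> * (of_real x - of_real a) / of_real b) ^ m
      - of_nat m * exp (\<i> * of_real k * of_real x) * (- \<i> / of_real b) / (1 - \<i> * (of_real x - of_real a) / of_real b) ^ Suc m
      = \<i> * of_real k * Gf k a b m x + (\<i> * of_nat m / of_real b) * Gf k a b (Suc m) x"
  proof -
    obtain E Z where EZ: "E = exp (\<i> * of_real k * of_real x)" "Z = (1 - \<i> * (of_real x - of_real a) / of_real b :: complex)" by simp
    have Z: "Z \<noteq> 0" using zne[OF b] EZ by simp
    have Bn: "complex_of_real b \<noteq> 0" using b by simp
    have "\<i> * of_real k * E / Z ^ m - of_nat m * E * (- \<i> / of_real b) / Z ^ Suc m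
       = \<i> * of_real k * (E / Z ^ m) + (\<i> * of_nat m / of_real b) * (E / Z ^ Suc m)"
      using Z Bn by (simp add: field_simps)
    then show ?thesis unfolding Gf_def Fc_def EZ .
  qed
  ultimately have "(Fc k a b m has_field_derivative (\<i> * of_real k * Gf k a b m x + (\<i> * of_nat m / of_real b) * Gf k a b (Suc m) x)) (at (of_real x))"
    by simp
  from has_vector_derivative_real_field[OF this] show ?thesis unfolding Gf_def[abs_def] by simp
qed

lemma norm_Gf:
  assumes b: "b \<noteq> 0"
  shows "norm (Gf k a b m x) = 1 / (sqrt (1 + ((x - a)/b)^2)) ^ m"
proof -
  have "norm (exp (\<i> * of_real k * of_real x)) = 1"
  proof -
    have "\<i> * of_real k * of_real x = \<i> * (of_real (k*x) :: complex)" by simp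
    then show ?thesis by (simp only: norm_exp_i_times)
  qed
  moreover have "norm (1 - \<i> * (of_real x - of_real a) / of_real b :: complex) = sqrt (1 + ((x - a)/b)^2)"
  proof -
    have "(1 - \<i> * (of_real x - of_real a) / of_real b :: complex) = Complex 1 (- ((x-a)/b))"
      by (simp add: complex_eq_iff)
    then show ?thesis by (simp add: cmod_def power2_eq_square)
  qed
  ultimately show ?thesis unfolding Gf_def Fc_def by (simp add: norm_divide norm_power)
qed

lemma inv_le1: "(y::real) \<ge> 1 \<Longrightarrow> 1/y \<le> 1" by simp

lemma norm_Gf_le1:
  assumes b: "b \<noteq> 0" and m: "m \<ge> 1" shows "norm (Gf k a b m x) \<le> 1"
proof -
  have "sqrt (1 + ((x - a)/b)^2) \<ge> 1" by simp
  then have "(sqrt (1 + ((x - a)/b)^2)) ^ m \<ge> 1" using one_le_power by blast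
  then show ?thesis unfolding norm_Gf[OF b] by (rule inv_le1)
qed

lemma norm_Gf2:
  assumes b: "b \<noteq> 0" shows "norm (Gf k a b 2 x) = 1 / (1 + ((x - a)/b)^2)"
  unfolding norm_Gf[OF b] by (simp add: add_nonneg_nonneg)



definition Hc :: "real \<Rightarrow> real \<Rightarrow> real \<Rightarrow> complex \<Rightarrow> complex \<Rightarrow> complex \<Rightarrow> complex \<Rightarrow> real \<Rightarrow> complex" where
  "Hc k a b c0 c1 c2 c3 x = c0 * Gf k a b 2 x + c1 * Gf k a b 3 x + c2 * Gf k a b 4 x + c3 * Gf k a b 5 x"

lemma Hc_deriv:
  assumes b: "b \<noteq> 0"
    and "d0 = \<i> * of_real k * c0" "d1 = \<i> * of_real k * c1 + (2 * \<i> / of_real b) * c0"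
        "d2 = \<i> * of_real k * c2 + (3 * \<i> / of_real b) * c1" "d3 = (4 * \<i> / of_real b) * c2"
  shows "(Hc k a b c0 c1 c2 0 has_vector_derivative Hc k a b d0 d1 d2 d3 x) (at x)"
proof -
  note G = Gf_deriv[OF b, of k a]
  have "((\<lambda>x. c0 * Gf k a b 2 x + c1 * Gf k a b 3 x + c2 * Gf k a b 4 x) has_vector_derivative
     c0 * (\<i> * of_real k * Gf k a b 2 x + (\<i> * of_nat 2 / of_real b) * Gf k a b (Suc 2) x)
   + c1 * (\<i> * of_real k * Gf k a b 3 x + (\<i> * of_nat 3 / of_real b) * Gf k a b (Suc 3) x)
   + c2 * (\<i> * of_real k * Gf k a b 4 x + (\<i> * of_nat 4 / of_real b) * Gf k a b (Suc 4) x)) (at x)"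
    by (intro has_vector_derivative_add has_vector_derivative_mult_right G)
  moreover have "Hc k a b c0 c1 c2 0 = (\<lambda>x. c0 * Gf k a b 2 x + c1 * Gf k a b 3 x + c2 * Gf k a b 4 x)"
    by (simp add: Hc_def fun_eq_iff)
  moreover have "c0 * (\<i> * of_real k * Gf k a b 2 x + (\<i> * of_nat 2 / of_real b) * Gf k a b (Suc 2) x)
   + c1 * (\<i> * of_real k * Gf k a b 3 x + (\<i> * of_nat 3 / of_real b) * Gf k a b (Suc 3) x)
   + c2 * (\<i> * of_real k * Gf k a b 4 x + (\<i> * of_nat 4 / of_real b) * Gf k a b (Suc 4) x)
   = Hc k a b d0 d1 d2 d3 x"
    unfolding Hc_def assms(2-5) by (simp add: numeral_eq_Suc algebra_simps)
  ultimately show ?thesis by simp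
qed

lemma norm_Hc:
  assumes b: "b \<noteq> 0"
  shows "norm (Hc k a b c0 c1 c2 c3 x) \<le> norm c0 + norm c1 + norm c2 + norm c3"
proof -
  have n: "norm (c * Gf k a b m x) \<le> norm c" if "m \<ge> 1" for c m
    using norm_Gf_le1[OF b that, where k=k and a=a and x=x] by (simp add: norm_mult mult_left_le)
  have "norm (Hc k a b c0 c1 c2 c3 x) \<le> norm (c0 * Gf k a b 2 x) + norm (c1 * Gf k a b 3 x) + norm (c2 * Gf k a b 4 x) + norm (c3 * Gf k a b 5 x)"
    unfolding Hc_def by (intro order_trans[OF norm_triangle_ineq] add_mono order_refl)
  also have "\<dots> \<le> norm c0 + norm c1 + norm c2 + norm c3"
    by (intro add_mono n) auto
  finally show ?thesis .
qed



lemma alg1: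
  fixes lam w1 w2 r al be :: complex and ep k c12 m11 m12 n11 D M :: real
  assumes E1: "lam * w1 + of_real (k^2) * (of_real ep * w1 + of_real D * w2) - \<i> * of_real k * (of_real M * w1) = 0"
  shows "lam * (r * w1) - (of_real ep * ((- of_real (k^2) * r + be) * w1) + of_real c12 * ((- of_real (k^2) * r + be) * w2)
      + of_real m11 * ((\<i> * of_real k * r + al) * w1) + of_real m12 * ((\<i> * of_real k * r + al) * w2) + of_real n11 * (r * w1))
   = r * (of_real (k^2 * (c12 - D)) * w2 - \<i> * of_real k * (of_real (m11 - M) * w1 + of_real m12 * w2) - of_real n11 * w1)
     - ((of_real ep * w1 + of_real c12 * w2) * be + (of_real m11 * w1 + of_real m12 * w2) * al)"
proof -
  have "lam * (r * w1) - (of_real ep * ((- of_real (k^2) * r + be) * w1) + of_real c12 * ((- of_real (k^2) * r + be) * w2)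
      + of_real m11 * ((\<i> * of_real k * r + al) * w1) + of_real m12 * ((\<i> * of_real k * r + al) * w2) + of_real n11 * (r * w1))
   = r * (of_real (k^2 * (c12 - D)) * w2 - \<i> * of_real k * (of_real (m11 - M) * w1 + of_real m12 * w2) - of_real n11 * w1)
     - ((of_real ep * w1 + of_real c12 * w2) * be + (of_real m11 * w1 + of_real m12 * w2) * al)
     + r * (lam * w1 + of_real (k^2) * (of_real ep * w1 + of_real D * w2) - \<i> * of_real k * (of_real M * w1))"
    by (simp add: algebra_simps)
  then show ?thesis using E1 by simp
qed

lemma alg2:
  fixes lam w1 w2 r al be :: complex and ep k s n22 N :: real
  assumes E2: "lam * w2 + of_real (k^2 / ep) * w2 - \<i> * of_real k * of_real s * w2 - of_real (1/ep) * w1 - of_real N * w2 = 0"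
  shows "lam * (r * w2) - (of_real (1/ep) * ((- of_real (k^2) * r + be) * w2) + of_real s * ((\<i> * of_real k * r + al) * w2)
      + of_real (1/ep) * (r * w1) + of_real n22 * (r * w2))
   = r * (- (of_real (n22 - N) * w2)) - (of_real (1/ep) * be * w2 + of_real s * al * w2)"
proof -
  have "lam * (r * w2) - (of_real (1/ep) * ((- of_real (k^2) * r + be) * w2) + of_real s * ((\<i> * of_real k * r + al) * w2)
      + of_real (1/ep) * (r * w1) + of_real n22 * (r * w2))
   = r * (- (of_real (n22 - N) * w2)) - (of_real (1/ep) * be * w2 + of_real s * al * w2)
     + r * (lam * w2 + of_real (k^2 / ep) * w2 - \<i> * of_real k * of_real s * w2 - of_real (1/ep) * w1 - of_real N * w2)"
    by (simp add: algebra_simps)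
  then show ?thesis using E2 by simp
qed

lemma nle1: "norm (w::complex) \<le> 1 \<Longrightarrow> norm (of_real A * w) \<le> \<bar>A\<bar>"
  by (simp add: norm_mult mult_left_le)

lemma nb1:
  fixes w1 w2 :: complex
  assumes "norm w1 \<le> 1" "norm w2 \<le> 1"
  shows "norm (of_real A * w2 - \<i> * of_real k * (of_real B * w1 + of_real C * w2) - of_real E * w1)
     \<le> \<bar>A\<bar> + \<bar>k\<bar> * (\<bar>B\<bar> + \<bar>C\<bar>) + \<bar>E\<bar>"
proof -
  have "norm (of_real B * w1 + of_real C * w2) \<le> \<bar>B\<bar> + \<bar>C\<bar>"
    using nle1[OF assms(1), of B] nle1[OF assms(2), of C] norm_triangle_ineq by (smt (verit))
  then have "norm (\<i> * of_real k * (of_real B * w1 + of_real C * w2)) \<le> \<bar>k\<bar> * (\<bar>B\<bar> + \<bar>C\<bar>)"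
    by (simp add: norm_mult mult_left_mono)
  moreover have "norm (of_real A * w2) \<le> \<bar>A\<bar>" by (rule nle1[OF assms(2)])
  moreover have "norm (of_real E * w1) \<le> \<bar>E\<bar>" by (rule nle1[OF assms(1)])
  ultimately show ?thesis by (smt (verit) norm_triangle_ineq4)
qed



lemma norm_scal_pair: "norm (c * w1, c * w2) = norm (c::complex) * norm (w1, w2)"
  by (simp add: norm_Pair norm_mult power_mult_distrib distrib_left[symmetric] real_sqrt_mult)

lemma rho_facts:
  fixes k a b :: real and w1 w2 :: complex
  assumes b: "b \<ge> 1"
  defines "\<rho> \<equiv> Hc k a b 1 0 0 0"
    and "\<rho>1 \<equiv> Hc k a b (\<i> * of_real k) (2 * \<i> / of_real b) 0 0"
    and "\<rho>2 \<equiv> Hc k a b (- of_real (k^2)) (- of_real (4*k/b)) (- of_real (6/b^2)) 0"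
    and "p \<equiv> \<lambda>x. (Hc k a b 1 0 0 0 x * w1, Hc k a b 1 0 0 0 x * w2)"
  shows "p \<in> Dom2"
    and "vector_derivative p (at x) = (\<rho>1 x * w1, \<rho>1 x * w2)"
    and "vector_derivative (\<lambda>y. vector_derivative p (at y)) (at x) = (\<rho>2 x * w1, \<rho>2 x * w2)"
    and "\<rho> x = Gf k a b 2 x"
    and "\<rho>1 x = \<i> * of_real k * Gf k a b 2 x + (2 * \<i> / of_real b) * Gf k a b 3 x"
    and "\<rho>2 x = - of_real (k^2) * Gf k a b 2 x + (- of_real (4*k/b) * Gf k a b 3 x - of_real (6/b^2) * Gf k a b 4 x)"
proof -
  have b0: "b \<noteq> 0" using b by simp
  define \<rho>3 where "\<rho>3 = Hc k a b (\<i> * of_real k * (- of_real (k^2))) (\<i> * of_real k * (- of_real (4*k/b)) + (2 * \<i> / of_real b) * (- of_real (k^2)))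
     (\<i> * of_real k * (- of_real (6/b^2)) + (3 * \<i> / of_real b) * (- of_real (4*k/b))) ((4 * \<i> / of_real b) * (- of_real (6/b^2)))"
  have d1: "(\<rho> has_vector_derivative \<rho>1 x) (at x)" for x
    unfolding \<rho>_def \<rho>1_def by (rule Hc_deriv[OF b0]) simp_all
  have d2: "(\<rho>1 has_vector_derivative \<rho>2 x) (at x)" for x
    unfolding \<rho>1_def \<rho>2_def using b0 by (intro Hc_deriv[OF b0]) (simp_all add: field_simps power2_eq_square)
  have d3: "(\<rho>2 has_vector_derivative \<rho>3 x) (at x)" for x
    unfolding \<rho>2_def \<rho>3_def by (rule Hc_deriv[OF b0]) simp_all
  define B where "B = max (max (norm (1::complex) + norm (0::complex) + norm (0::complex) + norm (0::complex))
      (norm (\<i> * of_real k) + norm (2 * \<i> / of_real b) + norm (0::complex) + norm (0::complex)))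
    (max (norm (- of_real (k^2)::complex) + norm (- of_real (4*k/b)::complex) + norm (- of_real (6/b^2)::complex) + norm (0::complex))
      (norm (\<i> * of_real k * (- of_real (k^2))) + norm (\<i> * of_real k * (- of_real (4*k/b)) + (2 * \<i> / of_real b) * (- of_real (k^2)))
     + norm (\<i> * of_real k * (- of_real (6/b^2)) + (3 * \<i> / of_real b) * (- of_real (4*k/b))) + norm ((4 * \<i> / of_real b) * (- of_real (6/b^2)))))"
  have bb: "norm (\<rho> x) \<le> B" "norm (\<rho>1 x) \<le> B" "norm (\<rho>2 x) \<le> B" "norm (\<rho>3 x) \<le> B" for x
    unfolding B_def \<rho>_def \<rho>1_def \<rho>2_def \<rho>3_def
    by (rule order_trans[OF norm_Hc[OF b0]], simp)+
  note D = dom2_scal[OF d1 d2 d3 bb, of w1 w2, unfolded \<rho>_def, folded p_def]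
  show "p \<in> Dom2" by (rule D(1))
  show "vector_derivative p (at x) = (\<rho>1 x * w1, \<rho>1 x * w2)" by (rule D(2))
  show "vector_derivative (\<lambda>y. vector_derivative p (at y)) (at x) = (\<rho>2 x * w1, \<rho>2 x * w2)" by (rule D(3))
  show "\<rho> x = Gf k a b 2 x" unfolding \<rho>_def Hc_def by simp
  show "\<rho>1 x = \<i> * of_real k * Gf k a b 2 x + (2 * \<i> / of_real b) * Gf k a b 3 x" unfolding \<rho>1_def Hc_def by simp
  show "\<rho>2 x = - of_real (k^2) * Gf k a b 2 x + (- of_real (4*k/b) * Gf k a b 3 x - of_real (6/b^2) * Gf k a b 4 x)"
    unfolding \<rho>2_def Hc_def by simp
qed



lemma weyl:
  fixes \<epsilon> chi s k D M N K :: real and \<phi> dg U V :: "real \<Rightarrow> real" and lam w1 w2 :: complex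
  assumes eps: "\<epsilon> > 0"
   and bnd: "\<And>x. \<bar>cd12 chi \<phi> U V x\<bar> \<le> K" "\<And>x. \<bar>cm11 chi s \<phi> V x\<bar> \<le> K" "\<And>x. \<bar>cm12 chi \<phi> U V x\<bar> \<le> K"
      "\<And>x. \<bar>cn11 chi \<phi> V x\<bar> \<le> K" "\<And>x. \<bar>cn22 \<epsilon> dg V x\<bar> \<le> K"
   and lim: "(cd12 chi \<phi> U V \<longlongrightarrow> D) at_top" "(cm11 chi s \<phi> V \<longlongrightarrow> M) at_top"
      "(cm12 chi \<phi> U V \<longlongrightarrow> 0) at_top" "(cn11 chi \<phi> V \<longlongrightarrow> 0) at_top" "(cn22 \<epsilon> dg V \<longlongrightarrow> N) at_top"
   and w: "norm (w1, w2) = 1"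
   and E1: "lam * w1 + of_real (k^2) * (of_real \<epsilon> * w1 + of_real D * w2) - \<i> * of_real k * (of_real M * w1) = 0"
   and E2: "lam * w2 + of_real (k^2 / \<epsilon>) * w2 - \<i> * of_real k * of_real s * w2 - of_real (1/\<epsilon>) * w1 - of_real N * w2 = 0"
  shows "lam \<in> spec (lin_op \<epsilon> chi s \<phi> dg U V)"
proof (rule spec_approx)
  fix \<delta> :: real assume \<delta>: "\<delta> > 0"
  let ?c12 = "cd12 chi \<phi> U V" and ?m11 = "cm11 chi s \<phi> V" and ?m12 = "cm12 chi \<phi> U V"
    and ?n11 = "cn11 chi \<phi> V" and ?n22 = "cn22 \<epsilon> dg V"
  define \<Delta> where "\<Delta> x = k^2 * \<bar>?c12 x - D\<bar> + \<bar>k\<bar> * (\<bar>?m11 x - M\<bar> + \<bar>?m12 x\<bar>) + \<bar>?n11 x\<bar> + \<bar>?n22 x - N\<bar>" for x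
  have "((\<lambda>x. k^2 * \<bar>?c12 x - D\<bar> + \<bar>k\<bar> * (\<bar>?m11 x - M\<bar> + \<bar>?m12 x\<bar>) + \<bar>?n11 x\<bar> + \<bar>?n22 x - N\<bar>)
     \<longlongrightarrow> k^2 * \<bar>D - D\<bar> + \<bar>k\<bar> * (\<bar>M - M\<bar> + \<bar>0\<bar>) + \<bar>0\<bar> + \<bar>N - N\<bar>) at_top"
    by (intro tendsto_intros lim)
  then have "(\<Delta> \<longlongrightarrow> 0) at_top" by (simp add: \<Delta>_def[abs_def])
  then have "eventually (\<lambda>x. \<Delta> x < \<delta>/4) at_top" using \<delta> by (intro order_tendstoD(2)) auto
  then obtain X where X: "\<And>x. x \<ge> X \<Longrightarrow> \<Delta> x < \<delta>/4" by (auto simp: eventually_at_top_linorder)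
  have K0: "K \<ge> 0" using bnd(1)[of 0] by linarith
  define Kd where "Kd = k^2 * (K + \<bar>D\<bar>) + \<bar>k\<bar> * ((K + \<bar>M\<bar>) + K) + K + (K + \<bar>N\<bar>)"
  have \<Delta>0: "\<Delta> x \<ge> 0" for x unfolding \<Delta>_def by simp
  have \<Delta>le: "\<Delta> x \<le> Kd" for x
  proof -
    have "\<bar>?c12 x - D\<bar> \<le> K + \<bar>D\<bar>" using bnd(1)[of x] by linarith
    moreover have "\<bar>?m11 x - M\<bar> \<le> K + \<bar>M\<bar>" using bnd(2)[of x] by linarith
    moreover have "\<bar>?n22 x - N\<bar> \<le> K + \<bar>N\<bar>" using bnd(5)[of x] by linarith
    ultimately show ?thesis unfolding \<Delta>_def Kd_def using bnd(3,4)[of x]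
      by (intro add_mono mult_left_mono) auto
  qed
  have Kd0: "Kd \<ge> 0" using \<Delta>0[of 0] \<Delta>le[of 0] by linarith
  define C0 where "C0 = (\<epsilon> + K + 1/\<epsilon>) * (4*\<bar>k\<bar> + 6) + (2*K + \<bar>s\<bar>) * 2"
  have C00: "C0 \<ge> 0" unfolding C0_def using K0 eps by simp
  define b where "b = max 1 (2*C0/\<delta>)"
  have b1: "b \<ge> 1" unfolding b_def by simp
  have b0: "b \<noteq> 0" using b1 by simp
  have Cb: "C0 / b \<le> \<delta>/2"
  proof -
    have "2*C0/\<delta> \<le> b" unfolding b_def by simp
    then have "C0 \<le> b * \<delta> / 2" using \<delta> by (simp add: field_simps)
    then show ?thesis using b1 by (simp add: field_simps)
  qed
  define T where "T = 4*Kd/\<delta> + 1"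
  have T1: "T \<ge> 1" unfolding T_def using Kd0 \<delta> by simp
  define a where "a = X + b*T"
  define p where "p = (\<lambda>x. (Hc k a b 1 0 0 0 x * w1, Hc k a b 1 0 0 0 x * w2))"
  note R = rho_facts(1-3)[OF b1, where k=k and a=a and ?w1.0=w1 and ?w2.0=w2, folded p_def]
    rho_facts(4-6)[OF b1, where k=k and a=a]
  show "\<exists>p\<in>Dom2. (\<exists>x. norm (p x) \<ge> 1) \<and> (\<forall>x. norm (shiftop lam (lin_op \<epsilon> chi s \<phi> dg U V) p x) \<le> \<delta>)"
  proof (intro bexI[of _ p] conjI exI[of _ a] allI)
    show "p \<in> Dom2" by (rule R(1))
    show "norm (p a) \<ge> 1"
      unfolding p_def R(4) norm_scal_pair w using norm_Gf2[OF b0, of k a a] by simp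
    fix x
    show "norm (shiftop lam (lin_op \<epsilon> chi s \<phi> dg U V) p x) \<le> \<delta>"
    proof -
    let ?L = "lin_op \<epsilon> chi s \<phi> dg U V"
    define G2 where "G2 = Gf k a b 2 x"
    define G3 where "G3 = Gf k a b 3 x"
    define G4 where "G4 = Gf k a b 4 x"
    define al where "al = (2 * \<i> / of_real b) * G3"
    define be where "be = - of_real (4*k/b) * G3 - of_real (6/b^2) * G4"
    have v1: "vector_derivative p (at x) = ((\<i> * of_real k * G2 + al) * w1, (\<i> * of_real k * G2 + al) * w2)"
      by (subst R(2)) (simp only: R(5) G2_def G3_def al_def)
    have v2: "vector_derivative (\<lambda>y. vector_derivative p (at y)) (at x) = ((- of_real (k^2) * G2 + be) * w1, (- of_real (k^2) * G2 + be) * w2)"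
      by (subst R(3)) (simp only: R(6) G2_def G3_def G4_def be_def)
    have px: "p x = (G2 * w1, G2 * w2)" by (simp only: p_def R(4) G2_def)
    note Lx = lin_op_scal[OF v1 v2 px, of \<epsilon> chi s \<phi> dg U V]
    have sx: "shiftop lam ?L p x = (lam * (G2 * w1) - fst (?L p x), lam * (G2 * w2) - snd (?L p x))"
      by (simp add: shiftop_def csc_def px prod_eq_iff)
    have f1: "lam * (G2 * w1) - fst (?L p x) = G2 * (of_real (k^2 * (?c12 x - D)) * w2 - \<i> * of_real k * (of_real (?m11 x - M) * w1 + of_real (?m12 x) * w2) - of_real (?n11 x) * w1)
        - ((of_real \<epsilon> * w1 + of_real (?c12 x) * w2) * be + (of_real (?m11 x) * w1 + of_real (?m12 x) * w2) * al)"
      unfolding Lx fst_conv by (rule alg1[OF E1])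
    have f2: "lam * (G2 * w2) - snd (?L p x) = G2 * (- (of_real (?n22 x - N) * w2)) - (of_real (1/\<epsilon>) * be * w2 + of_real s * al * w2)"
      unfolding Lx snd_conv by (rule alg2[OF E2])
    have nw1: "norm w1 \<le> 1" using norm_fst_le[of w1 w2] w by simp
    have nw2: "norm w2 \<le> 1" using norm_snd_le[of w2 w1] w by simp
    have nG2: "norm G2 \<le> 1" unfolding G2_def by (rule norm_Gf_le1[OF b0]) simp
    have nG3: "norm G3 \<le> 1" unfolding G3_def by (rule norm_Gf_le1[OF b0]) simp
    have nG4: "norm G4 \<le> 1" unfolding G4_def by (rule norm_Gf_le1[OF b0]) simp
    have nal: "norm al \<le> 2 / b"
    proof -
      have "norm al = (2 / b) * norm G3" unfolding al_def using b1 by (simp add: norm_mult norm_divide)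
      also have "\<dots> \<le> 2 / b" using nG3 b1 by (intro mult_left_le) auto
      finally show ?thesis .
    qed
    have nbe: "norm be \<le> (4 * \<bar>k\<bar> + 6) / b"
    proof -
      have "norm be \<le> norm (- of_real (4*k/b) * G3) + norm (of_real (6/b^2) * G4)"
        unfolding be_def by (rule norm_triangle_ineq4)
      also have "\<dots> \<le> \<bar>4*k/b\<bar> + \<bar>6/b^2\<bar>"
        using nle1[OF nG3, of "4*k/b"] nle1[OF nG4, of "6/b^2"] by (simp add: norm_mult)
      also have "\<dots> \<le> 4 * \<bar>k\<bar> / b + 6 / b"
      proof -
        have "6 / b^2 \<le> 6 / b" using b1 by (simp add: divide_left_mono power2_eq_square mult_le_cancel_left1)
        then show ?thesis using b1 by (simp add: abs_mult abs_divide)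
      qed
      finally show ?thesis by (simp add: add_divide_distrib)
    qed
    have A1: "norm (G2 * (of_real (k^2 * (?c12 x - D)) * w2 - \<i> * of_real k * (of_real (?m11 x - M) * w1 + of_real (?m12 x) * w2) - of_real (?n11 x) * w1))
      \<le> norm G2 * (k^2 * \<bar>?c12 x - D\<bar> + \<bar>k\<bar> * (\<bar>?m11 x - M\<bar> + \<bar>?m12 x\<bar>) + \<bar>?n11 x\<bar>)"
      unfolding norm_mult using nb1[OF nw1 nw2, of "k^2 * (?c12 x - D)" k "?m11 x - M" "?m12 x" "?n11 x"]
      by (intro mult_left_mono) (auto simp: abs_mult)
    have A2: "norm ((of_real \<epsilon> * w1 + of_real (?c12 x) * w2) * be) \<le> (\<epsilon> + K) * norm be"
    proof -
      have "norm (of_real \<epsilon> * w1 + of_real (?c12 x) * w2) \<le> \<epsilon> + K"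
        using nle1[OF nw1, of \<epsilon>] nle1[OF nw2, of "?c12 x"] bnd(1)[of x] eps norm_triangle_ineq[of "of_real \<epsilon> * w1" "of_real (?c12 x) * w2"]
        by simp
      then show ?thesis unfolding norm_mult by (intro mult_right_mono) auto
    qed
    have A3: "norm ((of_real (?m11 x) * w1 + of_real (?m12 x) * w2) * al) \<le> (2*K) * norm al"
    proof -
      have "norm (of_real (?m11 x) * w1 + of_real (?m12 x) * w2) \<le> 2*K"
        using nle1[OF nw1, of "?m11 x"] nle1[OF nw2, of "?m12 x"] bnd(2,3)[of x] norm_triangle_ineq[of "of_real (?m11 x) * w1" "of_real (?m12 x) * w2"]
        by simp
      then show ?thesis unfolding norm_mult by (intro mult_right_mono) auto
    qed
    have B1: "norm (G2 * (- (of_real (?n22 x - N) * w2))) \<le> norm G2 * \<bar>?n22 x - N\<bar>"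
      unfolding norm_mult norm_minus_cancel using nle1[OF nw2, of "?n22 x - N"]
      by (intro mult_left_mono) (auto simp: norm_mult)
    have B2: "norm (of_real (1/\<epsilon>) * be * w2 + of_real s * al * w2) \<le> (1/\<epsilon>) * norm be + \<bar>s\<bar> * norm al"
    proof -
      have "norm (of_real (1/\<epsilon>) * be * w2) = (\<bar>1/\<epsilon>\<bar> * norm be) * norm w2" by (simp only: norm_mult norm_of_real)
      also have "\<dots> \<le> \<bar>1/\<epsilon>\<bar> * norm be" using nw2 by (intro mult_left_le) auto
      finally have "norm (of_real (1/\<epsilon>) * be * w2) \<le> (1/\<epsilon>) * norm be" using eps by simp
      moreover have "norm (of_real s * al * w2) \<le> \<bar>s\<bar> * norm al"
      proof -
        have "norm (of_real s * al * w2) = (\<bar>s\<bar> * norm al) * norm w2" by (simp only: norm_mult norm_of_real)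
        also have "\<dots> \<le> \<bar>s\<bar> * norm al" using nw2 by (intro mult_left_le) auto
        finally show ?thesis .
      qed
      ultimately show ?thesis using norm_triangle_ineq[of "of_real (1/\<epsilon>) * be * w2" "of_real s * al * w2"] by linarith
    qed
    have tot: "norm (shiftop lam ?L p x) \<le> norm G2 * \<Delta> x + ((\<epsilon> + K + 1/\<epsilon>) * norm be + (2*K + \<bar>s\<bar>) * norm al)"
    proof -
      have "norm (shiftop lam ?L p x) \<le> norm (lam * (G2 * w1) - fst (?L p x)) + norm (lam * (G2 * w2) - snd (?L p x))"
        unfolding sx by (rule norm_Pair_le)
      also have "\<dots> \<le> (norm G2 * (k^2 * \<bar>?c12 x - D\<bar> + \<bar>k\<bar> * (\<bar>?m11 x - M\<bar> + \<bar>?m12 x\<bar>) + \<bar>?n11 x\<bar>) + ((\<epsilon> + K) * norm be + (2*K) * norm al))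
          + (norm G2 * \<bar>?n22 x - N\<bar> + ((1/\<epsilon>) * norm be + \<bar>s\<bar> * norm al))"
        unfolding f1 f2 using A1 A2 A3 B1 B2
          norm_triangle_ineq4[of "G2 * (of_real (k^2 * (?c12 x - D)) * w2 - \<i> * of_real k * (of_real (?m11 x - M) * w1 + of_real (?m12 x) * w2) - of_real (?n11 x) * w1)"
             "(of_real \<epsilon> * w1 + of_real (?c12 x) * w2) * be + (of_real (?m11 x) * w1 + of_real (?m12 x) * w2) * al"]
          norm_triangle_ineq[of "(of_real \<epsilon> * w1 + of_real (?c12 x) * w2) * be" "(of_real (?m11 x) * w1 + of_real (?m12 x) * w2) * al"]
          norm_triangle_ineq4[of "G2 * (- (of_real (?n22 x - N) * w2))" "of_real (1/\<epsilon>) * be * w2 + of_real s * al * w2"]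
        by linarith
      also have "\<dots> = norm G2 * \<Delta> x + ((\<epsilon> + K + 1/\<epsilon>) * norm be + (2*K + \<bar>s\<bar>) * norm al)"
        unfolding \<Delta>_def by (simp add: algebra_simps)
      finally show ?thesis .
    qed
    have rem: "(\<epsilon> + K + 1/\<epsilon>) * norm be + (2*K + \<bar>s\<bar>) * norm al \<le> \<delta>/2"
    proof -
      have "(\<epsilon> + K + 1/\<epsilon>) * norm be \<le> (\<epsilon> + K + 1/\<epsilon>) * ((4 * \<bar>k\<bar> + 6) / b)"
        using nbe eps K0 by (intro mult_left_mono) auto
      moreover have "(2*K + \<bar>s\<bar>) * norm al \<le> (2*K + \<bar>s\<bar>) * (2 / b)"
        using nal K0 by (intro mult_left_mono) auto
      moreover have "(\<epsilon> + K + 1/\<epsilon>) * ((4 * \<bar>k\<bar> + 6) / b) + (2*K + \<bar>s\<bar>) * (2 / b) = C0 / b"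
        unfolding C0_def using b0 eps by (simp add: field_simps)
      ultimately show ?thesis using Cb by linarith
    qed
    have main: "norm G2 * \<Delta> x \<le> \<delta>/2"
    proof (cases "x \<ge> X")
      case True
      then have "\<Delta> x < \<delta>/4" by (rule X)
      then have "norm G2 * \<Delta> x \<le> 1 * (\<delta>/4)" using nG2 \<Delta>0[of x]
        by (intro mult_mono) auto
      then show ?thesis using \<delta> by simp
    next
      case False
      have "a - x \<ge> b * T" using False unfolding a_def by simp
      then have ge: "(a - x) / b \<ge> T" using b1 by (simp add: pos_le_divide_eq mult.commute)
      have "(x - a)/b = - ((a - x)/b)" by (simp add: minus_divide_left)
      then have "((x - a)/b)^2 = ((a - x)/b)^2" by (simp only: power2_minus)
      also have "\<dots> \<ge> T^2" using ge T1 by (intro power_mono) auto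
      moreover have "T \<le> T^2"
      proof -
        have "T * 1 \<le> T * T" using T1 by (intro mult_left_mono) auto
        then show ?thesis by (simp add: power2_eq_square)
      qed
      ultimately have "((x - a)/b)^2 \<ge> T" by linarith
      then have q: "((x - a)/b)^2 \<ge> 4*Kd/\<delta>" unfolding T_def by simp
      have "norm G2 = 1 / (1 + ((x - a)/b)^2)" unfolding G2_def by (rule norm_Gf2[OF b0])
      then have "norm G2 * \<Delta> x \<le> Kd / (1 + 4*Kd/\<delta>)"
      proof -
        assume e: "norm G2 = 1 / (1 + ((x - a)/b)^2)"
        have "norm G2 * \<Delta> x = \<Delta> x / (1 + ((x - a)/b)^2)" using e by simp
        also have "\<dots> \<le> Kd / (1 + ((x - a)/b)^2)" using \<Delta>le[of x] by (intro divide_right_mono) auto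
        also have "\<dots> \<le> Kd / (1 + 4*Kd/\<delta>)"
        proof (rule divide_left_mono)
          show "1 + 4*Kd/\<delta> \<le> 1 + ((x - a)/b)^2" using q by simp
          show "0 \<le> Kd" by (rule Kd0)
          have "1 + 4*Kd/\<delta> > 0" using Kd0 \<delta> by (simp add: add_pos_nonneg)
          moreover have "1 + ((x - a)/b)^2 > 0" by (simp add: add_pos_nonneg)
          ultimately show "0 < (1 + ((x - a)/b)^2) * (1 + 4*Kd/\<delta>)" by simp
        qed
        finally show ?thesis .
      qed
      also have "\<dots> \<le> \<delta>/4"
      proof -
        have pos: "1 + 4*Kd/\<delta> > 0" using Kd0 \<delta> by (simp add: add_pos_nonneg)
        have "\<delta>/4 * (1 + 4*Kd/\<delta>) = \<delta>/4 + Kd" using \<delta> by (simp add: field_simps)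
        then have "Kd \<le> \<delta>/4 * (1 + 4*Kd/\<delta>)" using \<delta> by simp
        then show ?thesis using pos by (simp add: pos_divide_le_eq)
      qed
      finally show ?thesis using \<delta> by simp
    qed
    show ?thesis using tot rem main by linarith
    qed
  qed
qed




lemma quad_roots:
  fixes B C :: complex
  shows "\<exists>r1 r2. \<forall>z. z^2 + B * z + C = (z - r1) * (z - r2)"
proof -
  define S where "S = csqrt (B^2 - 4*C)"
  have S2: "S^2 = B^2 - 4*C" unfolding S_def by simp
  show ?thesis
  proof (intro exI allI)
    fix z
    have "(z - (-B + S)/2) * (z - (-B - S)/2) = z^2 + B*z + (B^2 - S^2)/4"
      by (simp add: field_simps power2_eq_square)
    also have "\<dots> = z^2 + B * z + C" using S2 by simp
    finally show "z^2 + B * z + C = (z - (-B + S)/2) * (z - (-B - S)/2)" by simp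
  qed
qed

lemma eig_vec:
  fixes \<epsilon> k D M N s :: real and lam :: complex
  assumes eps: "\<epsilon> > 0"
    and P: "(lam + of_real (k^2 * \<epsilon>) - \<i> * of_real k * of_real M) * (lam + of_real (k^2/\<epsilon>) - \<i> * of_real k * of_real s - of_real N)
            + of_real (k^2 * D / \<epsilon>) = 0"
  shows "\<exists>w1 w2. norm (w1, w2) = 1 \<and>
     lam * w1 + of_real (k^2) * (of_real \<epsilon> * w1 + of_real D * w2) - \<i> * of_real k * (of_real M * w1) = 0 \<and>
     lam * w2 + of_real (k^2 / \<epsilon>) * w2 - \<i> * of_real k * of_real s * w2 - of_real (1/\<epsilon>) * w1 - of_real N * w2 = 0"
proof -
  define d where "d = lam + of_real (k^2/\<epsilon>) - \<i> * of_real k * of_real s - of_real N"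
  define v1 where "v1 = d"
  define v2 where "v2 = (of_real (1/\<epsilon>) :: complex)"
  have nv: "norm (v1, v2) > 0"
  proof -
    have "norm v2 > 0" unfolding v2_def using eps by simp
    then show ?thesis using norm_snd_le[of v2 v1] by linarith
  qed
  define c where "c = 1 / norm (v1, v2)"
  define w1 where "w1 = of_real c * v1"
  define w2 where "w2 = of_real c * v2"
  have "norm (w1, w2) = norm (of_real c * v1, of_real c * v2)" unfolding w1_def w2_def ..
  also have "\<dots> = norm (of_real c :: complex) * norm (v1, v2)" by (rule norm_scal_pair)
  also have "\<dots> = \<bar>c\<bar> * norm (v1, v2)" by (simp only: norm_of_real)
  also have "\<dots> = 1" unfolding c_def using nv by simp
  finally have n1: "norm (w1, w2) = 1" .
  have e1: "lam * w1 + of_real (k^2) * (of_real \<epsilon> * w1 + of_real D * w2) - \<i> * of_real k * (of_real M * w1)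
     = of_real c * ((lam + of_real (k^2 * \<epsilon>) - \<i> * of_real k * of_real M) * (lam + of_real (k^2/\<epsilon>) - \<i> * of_real k * of_real s - of_real N)
            + of_real (k^2 * D / \<epsilon>))"
    unfolding w1_def w2_def v1_def v2_def d_def by (simp add: algebra_simps)
  have e2: "lam * w2 + of_real (k^2 / \<epsilon>) * w2 - \<i> * of_real k * of_real s * w2 - of_real (1/\<epsilon>) * w1 - of_real N * w2 = 0"
    unfolding w1_def w2_def v1_def v2_def d_def by (simp add: algebra_simps)
  show ?thesis using n1 e1 e2 P by auto
qed



definition Pf :: "real \<Rightarrow> real \<Rightarrow> real \<Rightarrow> real \<Rightarrow> real \<Rightarrow> real \<Rightarrow> complex \<Rightarrow> complex" where
  "Pf \<epsilon> s D M N k lam = (lam + of_real (k^2 * \<epsilon>) - \<i> * of_real k * of_real M) * (lam + of_real (k^2/\<epsilon>) - \<i> * of_real k * of_real s - of_real N)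
            + of_real (k^2 * D / \<epsilon>)"

lemma Pf_Im: "Im (Pf \<epsilon> s D M N k (of_real N)) = - k * (s * N + k^2 * (\<epsilon> * s + M / \<epsilon>))"
  unfolding Pf_def by (simp add: algebra_simps power2_eq_square)

lemma small_k:
  fixes \<epsilon> s D M N r :: real
  assumes "\<epsilon> > 0" "s > 0" "N > 0" "r > 0"
  shows "\<exists>k. Pf \<epsilon> s D M N k (of_real N) \<noteq> 0 \<and> norm (Pf \<epsilon> s D M N k (of_real N)) < r^2"
proof -
  have "((\<lambda>k. Pf \<epsilon> s D M N k (of_real N)) \<longlongrightarrow> Pf \<epsilon> s D M N 0 (of_real N)) (at 0)"
    unfolding Pf_def using assms(1) by (intro tendsto_intros) auto
  moreover have "Pf \<epsilon> s D M N 0 (of_real N) = 0" unfolding Pf_def by simp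
  ultimately have "((\<lambda>k. Pf \<epsilon> s D M N k (of_real N)) \<longlongrightarrow> 0) (at 0)" by simp
  then have ev1: "eventually (\<lambda>k. norm (Pf \<epsilon> s D M N k (of_real N)) < r^2) (at (0::real))"
    using assms(4) by (intro order_tendstoD(2)[OF tendsto_norm_zero]) auto
  have "((\<lambda>k::real. \<bar>k^2 * (\<epsilon> * s + M / \<epsilon>)\<bar>) \<longlongrightarrow> \<bar>0^2 * (\<epsilon> * s + M / \<epsilon>)\<bar>) (at 0)"
    by (intro tendsto_intros)
  then have ev2: "eventually (\<lambda>k::real. \<bar>k^2 * (\<epsilon> * s + M / \<epsilon>)\<bar> < s * N / 2) (at 0)"
    using assms by (intro order_tendstoD(2)) auto
  from eventually_conj[OF ev1 ev2] obtain d where d: "d > 0"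
    and dd: "\<And>k::real. k \<noteq> 0 \<Longrightarrow> dist k 0 < d \<Longrightarrow> norm (Pf \<epsilon> s D M N k (of_real N)) < r^2 \<and> \<bar>k^2 * (\<epsilon> * s + M / \<epsilon>)\<bar> < s * N / 2"
    unfolding eventually_at by auto
  define k where "k = d/2"
  have k: "k \<noteq> 0" "dist k 0 < d" using d by (auto simp: k_def)
  note kk = dd[OF k]
  have sN: "s * N > 0" using assms by simp
  have "- (s * N / 2) < k^2 * (\<epsilon> * s + M / \<epsilon>)" using kk unfolding abs_less_iff by linarith
  then have "s * N + k^2 * (\<epsilon> * s + M / \<epsilon>) > 0" using sN by linarith
  then have "Im (Pf \<epsilon> s D M N k (of_real N)) \<noteq> 0" unfolding Pf_Im using k(1) by simp
  then have "Pf \<epsilon> s D M N k (of_real N) \<noteq> 0" by auto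
  then show ?thesis using kk by blast
qed

lemma root_near:
  fixes \<epsilon> s D M N r :: real
  assumes "\<epsilon> > 0" "s > 0" "N > 0" "r > 0"
  shows "\<exists>k lam. Pf \<epsilon> s D M N k lam = 0 \<and> lam \<noteq> of_real N \<and> dist lam (of_real N) < r"
proof -
  obtain k where k: "Pf \<epsilon> s D M N k (of_real N) \<noteq> 0" "norm (Pf \<epsilon> s D M N k (of_real N)) < r^2"
    using small_k[OF assms] by blast
  define B where "B = (of_real (k^2 * \<epsilon>) - \<i> * of_real k * of_real M) + (of_real (k^2/\<epsilon>) - \<i> * of_real k * of_real s - of_real N)"
  define C where "C = (of_real (k^2 * \<epsilon>) - \<i> * of_real k * of_real M) * (of_real (k^2/\<epsilon>) - \<i> * of_real k * of_real s - of_real N) + of_real (k^2 * D / \<epsilon>)"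
  have PfE: "Pf \<epsilon> s D M N k z = z^2 + B * z + C" for z
    unfolding Pf_def B_def C_def by (simp add: algebra_simps power2_eq_square)
  obtain r1 r2 where rr: "\<And>z. z^2 + B * z + C = (z - r1) * (z - r2)" using quad_roots by blast
  have P: "Pf \<epsilon> s D M N k z = (z - r1) * (z - r2)" for z unfolding PfE rr ..
  have r1: "Pf \<epsilon> s D M N k r1 = 0" and r2: "Pf \<epsilon> s D M N k r2 = 0" unfolding P by simp_all
  have Q: "norm (of_real N - r1) * norm (of_real N - r2) < r^2" "of_real N \<noteq> r1" "of_real N \<noteq> r2"
    using k unfolding P by (auto simp: norm_mult)
  have "norm (of_real N - r1) < r \<or> norm (of_real N - r2) < r"
  proof (rule ccontr)
    assume "\<not> ?thesis"
    then have "r * r \<le> norm (of_real N - r1) * norm (of_real N - r2)"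
      using assms(4) by (intro mult_mono) auto
    then show False using Q(1) by (simp add: power2_eq_square)
  qed
  then show ?thesis
  proof
    assume "norm (of_real N - r1) < r"
    then show ?thesis using r1 Q(2) by (intro exI[of _ k] exI[of _ r1]) (auto simp: dist_norm norm_minus_commute)
  next
    assume "norm (of_real N - r2) < r"
    then show ?thesis using r2 Q(3) by (intro exI[of _ k] exI[of _ r2]) (auto simp: dist_norm norm_minus_commute)
  qed
qed



theorem theorem3p4:
  fixes chi s \<beta> um vp vm \<epsilon>0 :: real
    and \<phi> g dg :: "real \<Rightarrow> real"
    and U V :: "real \<Rightarrow> real \<Rightarrow> real"
  assumes chi_pos: "chi > 0"
    and phi_C1: "\<forall>x. (\<phi> has_real_derivative deriv \<phi> x) (at x)" "continuous_on UNIV (deriv \<phi>)"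
    and phi_deriv_pos: "\<forall>x. deriv \<phi> x > 0"
    and phi0: "\<phi> 0 > 0"
    and g_C1: "continuous_on {0..} dg"
      "\<forall>x\<ge>0. (g has_real_derivative dg x) (at x within {0..})"
    and g_pos: "\<forall>x\<ge>0. g x > 0"
    and beta: "\<beta> > 0" "\<forall>x. 0 \<le> x \<and> x < \<beta> \<longrightarrow> dg x < 0" "\<forall>x. x > \<beta> \<longrightarrow> dg x > 0"
    and um: "g \<beta> < um" "um < g 0"
      "\<exists>L. ((\<lambda>x. ereal (g x)) \<longlongrightarrow> L) at_top \<and> ereal um < L"
    and vpm: "0 < vp" "vp < \<beta>" "\<beta> < vm" "g vp = um" "g vm = um"
    and speed: "s > chi * \<phi> 0"
    and eps0: "\<epsilon>0 > 0"
    and pulses: "\<forall>\<epsilon>. 0 < \<epsilon> \<and> \<epsilon> < \<epsilon>0 \<longrightarrow>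
        traveling_pulse \<epsilon> chi s \<phi> g um vp vm (U \<epsilon>) (V \<epsilon>)"
    and coeff_wd: "\<forall>\<epsilon>. 0 < \<epsilon> \<and> \<epsilon> < \<epsilon>0 \<longrightarrow>
        (\<forall>\<xi>. (\<lambda>\<eta>. U \<epsilon> \<eta> * deriv \<phi> (deriv (V \<epsilon>) \<eta>)) differentiable (at \<xi>))"
  shows "\<exists>\<epsilon>1>0. \<forall>\<epsilon>. 0 < \<epsilon> \<and> \<epsilon> < \<epsilon>1 \<longrightarrow>
           (\<exists>lam\<in>ess_spec (lin_op \<epsilon> chi s \<phi> dg (U \<epsilon>) (V \<epsilon>)). Re lam > 0)"
proof (intro exI[of _ \<epsilon>0] conjI allI impI)
  show "\<epsilon>0 > 0" by (rule eps0)
  fix \<epsilon> :: real assume epsr: "0 < \<epsilon> \<and> \<epsilon> < \<epsilon>0"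
  have eps: "\<epsilon> > 0" using epsr by simp
  have tp: "traveling_pulse \<epsilon> chi s \<phi> g um vp vm (U \<epsilon>) (V \<epsilon>)" using pulses epsr by blast
  have wd: "\<forall>\<xi>. (\<lambda>\<eta>. U \<epsilon> \<eta> * deriv \<phi> (deriv (V \<epsilon>) \<eta>)) differentiable (at \<xi>)" using coeff_wd epsr by blast
  note tpf = tp[unfolded traveling_pulse_def]
  let ?L = "lin_op \<epsilon> chi s \<phi> dg (U \<epsilon>) (V \<epsilon>)"
  define N where "N = - dg vp / \<epsilon>"
  have "dg vp < 0" using beta(2) vpm by simp
  then have Npos: "N > 0" unfolding N_def using eps by (simp add: divide_neg_pos)
  have spos: "s > 0" using speed chi_pos phi0 by (smt (verit) mult_pos_pos)
  have "complex_of_real N \<in> ess_spec ?L"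
  proof (cases "\<forall>p\<in>Dom2. buc (shiftop 0 ?L p)")
    case False
    then obtain p where "p \<in> Dom2" "\<not> buc (shiftop 0 ?L p)" by blast
    from caseA[OF this] show ?thesis by (rule ess_univ)
  next
    case True
    note cb = caseB_coeffs[OF True]
    have vp0: "vp > 0" using vpm by simp
    note lims = coeff_limits[OF phi_C1(1) phi_C1(2) g_C1(1) g_C1(2) vp0 vpm(4) chi_pos eps
        conjunct1[OF conjunct2[OF conjunct2[OF conjunct2[OF conjunct2[OF tpf]]]]]
        conjunct1[OF conjunct2[OF conjunct2[OF conjunct2[OF conjunct2[OF conjunct2[OF tpf]]]]]]
        conjunct1[OF conjunct2[OF conjunct2[OF conjunct2[OF conjunct2[OF conjunct2[OF conjunct2[OF conjunct2[OF tpf]]]]]]]]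
        conjunct1[OF conjunct2[OF conjunct2[OF conjunct2[OF conjunct2[OF conjunct2[OF conjunct2[OF conjunct2[OF conjunct2[OF conjunct2[OF conjunct2[OF conjunct2[OF tpf]]]]]]]]]]]]
        wd cb(3)]
    have bK: "\<exists>K. \<forall>x. \<bar>f x\<bar> \<le> K" if "buc f" for f :: "real \<Rightarrow> real"
      using that unfolding buc_def bounded_iff by auto
    obtain K1 where K1: "\<And>x. \<bar>cd12 chi \<phi> (U \<epsilon>) (V \<epsilon>) x\<bar> \<le> K1" using bK[OF cb(1)] by blast
    obtain K2 where K2: "\<And>x. \<bar>cm11 chi s \<phi> (V \<epsilon>) x\<bar> \<le> K2" using bK[OF cb(2)] by blast
    obtain K3 where K3: "\<And>x. \<bar>cm12 chi \<phi> (U \<epsilon>) (V \<epsilon>) x\<bar> \<le> K3" using bK[OF cb(3)] by blast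
    obtain K4 where K4: "\<And>x. \<bar>cn11 chi \<phi> (V \<epsilon>) x\<bar> \<le> K4" using bK[OF cb(4)] by blast
    obtain K5 where K5: "\<And>x. \<bar>cn22 \<epsilon> dg (V \<epsilon>) x\<bar> \<le> K5" using bK[OF cb(5)] by blast
    define K where "K = max (max K1 K2) (max K3 (max K4 K5))"
    have KK: "\<And>x. \<bar>cd12 chi \<phi> (U \<epsilon>) (V \<epsilon>) x\<bar> \<le> K" "\<And>x. \<bar>cm11 chi s \<phi> (V \<epsilon>) x\<bar> \<le> K"
      "\<And>x. \<bar>cm12 chi \<phi> (U \<epsilon>) (V \<epsilon>) x\<bar> \<le> K" "\<And>x. \<bar>cn11 chi \<phi> (V \<epsilon>) x\<bar> \<le> K"
      "\<And>x. \<bar>cn22 \<epsilon> dg (V \<epsilon>) x\<bar> \<le> K"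
      unfolding K_def using K1 K2 K3 K4 K5 by (meson max.coboundedI1 max.coboundedI2 order_trans)+
    define D where "D = - chi * um * deriv \<phi> 0"
    define M where "M = s - chi * \<phi> 0"
    have lims': "(cd12 chi \<phi> (U \<epsilon>) (V \<epsilon>) \<longlongrightarrow> D) at_top" "(cm11 chi s \<phi> (V \<epsilon>) \<longlongrightarrow> M) at_top"
      "(cm12 chi \<phi> (U \<epsilon>) (V \<epsilon>) \<longlongrightarrow> 0) at_top" "(cn11 chi \<phi> (V \<epsilon>) \<longlongrightarrow> 0) at_top"
      "(cn22 \<epsilon> dg (V \<epsilon>) \<longlongrightarrow> N) at_top"
      using lims unfolding D_def M_def N_def by auto
    have inspec: "lam \<in> spec ?L" if P: "Pf \<epsilon> s D M N k lam = 0" for k lam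
    proof -
      obtain w1 w2 where w: "norm (w1, w2) = 1"
        "lam * w1 + of_real (k^2) * (of_real \<epsilon> * w1 + of_real D * w2) - \<i> * of_real k * (of_real M * w1) = 0"
        "lam * w2 + of_real (k^2 / \<epsilon>) * w2 - \<i> * of_real k * of_real s * w2 - of_real (1/\<epsilon>) * w1 - of_real N * w2 = 0"
        using eig_vec[OF eps P[unfolded Pf_def]] by blast
      show ?thesis by (rule weyl[OF eps KK lims' w])
    qed
    show ?thesis
    proof (rule ess_nonisolated)
      show "complex_of_real N \<in> spec ?L" by (rule inspec[of 0]) (simp add: Pf_def)
      fix r :: real assume r: "r > 0"
      obtain k lam where "Pf \<epsilon> s D M N k lam = 0" "lam \<noteq> of_real N" "dist lam (of_real N) < r"
        using root_near[OF eps spos Npos r] by blast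
      then show "\<exists>\<mu>\<in>spec ?L. \<mu> \<noteq> complex_of_real N \<and> dist \<mu> (complex_of_real N) < r"
        using inspec by blast
    qed
  qed
  then show "\<exists>lam\<in>ess_spec ?L. Re lam > 0" using Npos by (intro bexI[of _ "complex_of_real N"]) auto
qed

end
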